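(* Let $X$ be a set and $\lambda,q\in\mathbf{k}$. Then $(\mathrm{DT}(\Delta X),\prec,\succ,\bullet,d_X)$ is a differential $q$-tridendriform algebra of weight $\lambda$.
   Context: $\mathbf{k}$ is a commutative unital ring. For a set $Y$, a valently decorated Schröder tree over $Y$ is a planar rooted tree in which every internal vertex has $k\ge2$ (ordered) children and is decorated by an element of $Y^{k-1}$; the tree with one leaf and no internal vertex is denoted $|$. Every tree $\tau\ne|$ is uniquely a grafting $\tau=\bigvee^{m+1}_{y_1,\dots,y_m}(\tau^{(0)},\dots,\tau^{(m)})$ ($m\ge1$) of trees $\tau^{(0)},\dots,\tau^{(m)}$ onto a new root decorated by $(y_1,\dots,y_m)$. Let $\mathrm{DT}(Y)$ be the free $\mathbf{k}$-module on all such trees other than $|$. Define bilinear $\prec,\succ,\bullet$ on $\mathrm{DT}(Y)$ recursively on total depth: for $\tau\ne|$, $|\succ\tau:=\tau\prec|:=\tau$, $|\prec\tau:=\tau\succ|:=0$, $|\bullet\tau:=\tau\bullet|:=0$, with the convention $|\prec|+|\succ|+q\,|\bullet|:=|$; and for $\tau=\bigvee^{m+1}_{x_1,\dots,x_m}(\tau^{(0)},\dots,\tau^{(m)})$, $\sigma=\bigvee^{n+1}_{y_1,\dots,y_n}(\sigma^{(0)},\dots,\sigma^{(n)})$, writing $u\star_q v:=u\succ v+u\prec v+q\,u\bullet v$: $\tau\prec\sigma:=\bigvee^{m+1}_{x_1,\dots,x_m}(\tau^{(0)},\dots,\tau^{(m-1)},\tau^{(m)}\star_q\sigma)$, $\tau\succ\sigma:=\bigvee^{n+1}_{y_1,\dots,y_n}(\tau\star_q\sigma^{(0)},\sigma^{(1)},\dots,\sigma^{(n)})$,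 $\tau\bullet\sigma:=\bigvee^{m+n+1}_{x_1,\dots,x_m,y_1,\dots,y_n}(\tau^{(0)},\dots,\tau^{(m-1)},\tau^{(m)}\star_q\sigma^{(0)},\sigma^{(1)},\dots,\sigma^{(n)})$ (grafting extended multilinearly). Let $\Delta X:=X\times\mathbb N=\{x^{(n)}\mid x\in X,n\ge0\}$ and take $Y=\Delta X$. Define $d_X:\mathrm{DT}(\Delta X)\to\mathrm{DT}(\Delta X)$ linearly by: if $\tau$ has decoration entries $x_1^{(r_1)},\dots,x_N^{(r_N)}$ (all entries of all vertex decorations, listed in some order), then $d_X(\tau)=\sum_{\emptyset\ne S\subseteq\{1,\dots,N\}}\lambda^{|S|-1}\tau_S$, where $\tau_S$ is the tree of the same shape with each entry $x_i^{(r_i)}$, $i\in S$, replaced by $x_i^{(r_i+1)}$. For $q\in\mathbf{k}$, a $q$-tridendriform algebra is a $\mathbf{k}$-module $T$ with bilinear operations $\prec,\succ,\bullet$ such that, writing $\star_q:=\prec+\succ+q\bullet$, for all $a,b,c\in T$: $(a\prec b)\prec c=a\prec(b\star_q c)$, $(a\succ b)\prec c=a\succ(b\prec c)$, $(a\star_q b)\succ c=a\succ(b\succ c)$, $(a\succ b)\bullet c=a\succ(b\bullet c)$, $(a\prec b)\bullet c=a\bullet(b\succ c)$, $(a\bullet b)\prec c=a\bullet(b\prec c)$, $(a\bullet b)\bullet c=a\bullet(b\bullet c)$. A derivation of weight $\lambda$ on it is a linear map $d$ with $d(a\ast b)=d(a)\ast b+a\ast d(b)+\lambda d(a)\ast d(b)$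 for each $\ast\in\{\prec,\succ,\bullet\}$ and all $a,b$; then $(T,\prec,\succ,\bullet,d)$ is a differential $q$-tridendriform algebra of weight $\lambda$. *)

theory Defs
  imports Main "HOL-Library.Poly_Mapping"
begin

section \<open>Valently decorated Schroeder trees\<close>

text \<open>Raw planar rooted trees: Leaf is the one-leaf tree |; Node ys ts is the grafting
  of the trees ts (in order) onto a new root decorated by the word ys.\<close>
datatype 'y vtree = Leaf | Node "'y list" "'y vtree list"

fun wf_vtree :: "'y set \<Rightarrow> 'y vtree \<Rightarrow> bool" where
  "wf_vtree Y Leaf = True"
| "wf_vtree Y (Node ys ts) =
     (length ys \<ge> 1 \<and> length ts = length ys + 1 \<and> set ys \<subseteq> Y \<and> (\<forall>t\<in>set ts. wf_vtree Y t))"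

type_synonym ('y, 'k) lin = "'y vtree \<Rightarrow>\<^sub>0 'k"

definition smul :: "'k::comm_ring_1 \<Rightarrow> ('a \<Rightarrow>\<^sub>0 'k) \<Rightarrow> ('a \<Rightarrow>\<^sub>0 'k)" where
  "smul c p = Poly_Mapping.map (\<lambda>a. c * a) p"

definition lin_ext :: "('a \<Rightarrow> ('b \<Rightarrow>\<^sub>0 'k::comm_ring_1)) \<Rightarrow> ('a \<Rightarrow>\<^sub>0 'k) \<Rightarrow> ('b \<Rightarrow>\<^sub>0 'k)" where
  "lin_ext f p = (\<Sum>t\<in>Poly_Mapping.keys p. smul (Poly_Mapping.lookup p t) (f t))"

definition bilin_ext :: "('a \<Rightarrow> 'a \<Rightarrow> ('b \<Rightarrow>\<^sub>0 'k::comm_ring_1))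
    \<Rightarrow> ('a \<Rightarrow>\<^sub>0 'k) \<Rightarrow> ('a \<Rightarrow>\<^sub>0 'k) \<Rightarrow> ('b \<Rightarrow>\<^sub>0 'k)" where
  "bilin_ext f p r = (\<Sum>t\<in>Poly_Mapping.keys p. \<Sum>s\<in>Poly_Mapping.keys r. smul (Poly_Mapping.lookup p t * Poly_Mapping.lookup r s) (f t s))"

definition graft :: "('y vtree \<Rightarrow> 'y vtree) \<Rightarrow> ('y, 'k::comm_ring_1) lin \<Rightarrow> ('y, 'k) lin" where
  "graft f p = lin_ext (\<lambda>t. Poly_Mapping.single (f t) 1) p"

lemma vtree_size_mem: "t \<in> set ts \<Longrightarrow> size t < size (Node xs ts)"
  by (induction ts) auto

lemma vtree_le_last: "(ts :: 'y vtree list) \<noteq> [] \<Longrightarrow> size (last ts) \<le> size_list size ts"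
  using vtree_size_mem[of "last ts" ts "[]"] by simp

lemma vtree_le_hd: "(ss :: 'y vtree list) \<noteq> [] \<Longrightarrow> size (hd ss) \<le> size_list size ss"
  using vtree_size_mem[of "hd ss" ss "[]"] by simp

lemma vtree_aux1: "(ss :: 'y vtree list) \<noteq> [] \<Longrightarrow> size (hd ss) < Suc (n + size_list size ss)"
  using vtree_le_hd[of ss] by simp

lemma vtree_aux0: "(ts :: 'y vtree list) \<noteq> [] \<Longrightarrow> size (last ts) < Suc (n + size_list size ts)"
  using vtree_le_last[of ts] by simp

lemma vtree_aux2: "(ts :: 'y vtree list) \<noteq> [] \<Longrightarrow> (ss :: 'y vtree list) \<noteq> [] \<Longrightarrow>
   size (last ts) + size (hd ss) < Suc (Suc (a + size_list size ts + (b + size_list size ss)))"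
  using vtree_le_hd[of ss] vtree_le_last[of ts] by simp

lemma vtree_size_last: "ts \<noteq> [] \<Longrightarrow> size (last ts) < size (Node xs ts)"
  by (rule vtree_size_mem) simp

lemma vtree_size_hd: "ss \<noteq> [] \<Longrightarrow> size (hd ss) < size (Node ys ss)"
  by (rule vtree_size_mem) simp


text \<open>star q t s is  t \<star>_q s = t \<succ> s + t \<prec> s + q (t \<bullet> s)  on basis trees, including the
  conventions for the leaf |, in particular  | \<star>_q | = |.\<close>
function star :: "'k::comm_ring_1 \<Rightarrow> 'y vtree \<Rightarrow> 'y vtree \<Rightarrow> ('y, 'k) lin" where
  "star q Leaf Leaf = Poly_Mapping.single Leaf 1"
| "star q Leaf (Node ys ss) = Poly_Mapping.single (Node ys ss) 1"
| "star q (Node xs ts) Leaf = Poly_Mapping.single (Node xs ts) 1"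
| "star q (Node xs ts) (Node ys ss) =
     (if ts = [] \<or> ss = [] then 0 else
        graft (\<lambda>u. Node xs (butlast ts @ [u])) (star q (last ts) (Node ys ss))
      + graft (\<lambda>u. Node ys (u # tl ss)) (star q (Node xs ts) (hd ss))
      + smul q (graft (\<lambda>u. Node (xs @ ys) (butlast ts @ [u] @ tl ss)) (star q (last ts) (hd ss))))"
  by pat_completeness auto
termination
  by (relation "measure (\<lambda>(q, t, s). size t + size s)")
     (auto simp: vtree_size_last vtree_size_hd intro: vtree_aux0 vtree_aux1 vtree_aux2)

text \<open>The three operations on basis trees (with the leaf conventions; on a pair of leaves
  they are set to 0, which never matters since only their combination star is used there).\<close>
fun prec_t :: "'k::comm_ring_1 \<Rightarrow> 'y vtree \<Rightarrow> 'y vtree \<Rightarrow> ('y, 'k) lin" where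
  "prec_t q Leaf s = 0"
| "prec_t q (Node xs ts) Leaf = Poly_Mapping.single (Node xs ts) 1"
| "prec_t q (Node xs ts) (Node ys ss) =
     graft (\<lambda>u. Node xs (butlast ts @ [u])) (star q (last ts) (Node ys ss))"

fun succ_t :: "'k::comm_ring_1 \<Rightarrow> 'y vtree \<Rightarrow> 'y vtree \<Rightarrow> ('y, 'k) lin" where
  "succ_t q t Leaf = 0"
| "succ_t q Leaf (Node ys ss) = Poly_Mapping.single (Node ys ss) 1"
| "succ_t q (Node xs ts) (Node ys ss) =
     graft (\<lambda>u. Node ys (u # tl ss)) (star q (Node xs ts) (hd ss))"

fun bul_t :: "'k::comm_ring_1 \<Rightarrow> 'y vtree \<Rightarrow> 'y vtree \<Rightarrow> ('y, 'k) lin" where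
  "bul_t q Leaf s = 0"
| "bul_t q t Leaf = 0"
| "bul_t q (Node xs ts) (Node ys ss) =
     graft (\<lambda>u. Node (xs @ ys) (butlast ts @ [u] @ tl ss)) (star q (last ts) (hd ss))"

definition DT_prec :: "'k::comm_ring_1 \<Rightarrow> ('y, 'k) lin \<Rightarrow> ('y, 'k) lin \<Rightarrow> ('y, 'k) lin" where
  "DT_prec q = bilin_ext (prec_t q)"
definition DT_succ :: "'k::comm_ring_1 \<Rightarrow> ('y, 'k) lin \<Rightarrow> ('y, 'k) lin \<Rightarrow> ('y, 'k) lin" where
  "DT_succ q = bilin_ext (succ_t q)"
definition DT_bul :: "'k::comm_ring_1 \<Rightarrow> ('y, 'k) lin \<Rightarrow> ('y, 'k) lin \<Rightarrow> ('y, 'k) lin" where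
  "DT_bul q = bilin_ext (bul_t q)"

definition DT :: "'y set \<Rightarrow> ('y, 'k::comm_ring_1) lin set" where
  "DT Y = {p. \<forall>t\<in>Poly_Mapping.keys p. t \<noteq> Leaf \<and> wf_vtree Y t}"

section \<open>The derivation d_X on DT(Delta X), Delta X = X \<times> N\<close>

fun nent :: "'y vtree \<Rightarrow> nat" where
  "nent Leaf = 0"
| "nent (Node ys ts) = length ys + sum_list (map nent ts)"

text \<open>Enumerate the decoration entries in preorder (root decoration first, then the subtrees
  from left to right) starting at offset o; shift_tree S off t replaces each entry
  x^(r) whose index lies in S by x^(r+1).\<close>
fun shift_tree :: "nat set \<Rightarrow> nat \<Rightarrow> ('x \<times> nat) vtree \<Rightarrow> ('x \<times> nat) vtree"
and shift_forest :: "nat set \<Rightarrow> nat \<Rightarrow> ('x \<times> nat) vtree list \<Rightarrow> ('x \<times> nat) vtree list" where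
  "shift_tree S off Leaf = Leaf"
| "shift_tree S off (Node ys ts) =
     Node (map (\<lambda>i. if off + i \<in> S then (fst (ys ! i), Suc (snd (ys ! i))) else ys ! i) [0..<length ys])
          (shift_forest S (off + length ys) ts)"
| "shift_forest S off [] = []"
| "shift_forest S off (t # ts) = shift_tree S off t # shift_forest S (off + nent t) ts"

definition d_tree :: "'k::comm_ring_1 \<Rightarrow> ('x \<times> nat) vtree \<Rightarrow> ('x \<times> nat, 'k) lin" where
  "d_tree lam t = (\<Sum>S\<in>Pow {0..<nent t} - {{}}.
       smul (lam ^ (card S - 1)) (Poly_Mapping.single (shift_tree S 0 t) 1))"

definition d_X :: "'k::comm_ring_1 \<Rightarrow> ('x \<times> nat, 'k) lin \<Rightarrow> ('x \<times> nat, 'k) lin" where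
  "d_X lam = lin_ext (d_tree lam)"

definition q_tridendriform ::
  "('k \<Rightarrow> 'a \<Rightarrow> 'a) \<Rightarrow> 'a::ab_group_add set \<Rightarrow> ('a \<Rightarrow> 'a \<Rightarrow> 'a) \<Rightarrow> ('a \<Rightarrow> 'a \<Rightarrow> 'a)
     \<Rightarrow> ('a \<Rightarrow> 'a \<Rightarrow> 'a) \<Rightarrow> 'k \<Rightarrow> bool" where
  "q_tridendriform sm T pr su bu q \<longleftrightarrow>
     0 \<in> T \<and> (\<forall>a\<in>T. \<forall>b\<in>T. a + b \<in> T) \<and> (\<forall>c. \<forall>a\<in>T. sm c a \<in> T) \<and>
     (\<forall>op\<in>{pr, su, bu}.
        (\<forall>a\<in>T. \<forall>b\<in>T. op a b \<in> T) \<and>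
        (\<forall>a\<in>T. \<forall>a'\<in>T. \<forall>b\<in>T. op (a + a') b = op a b + op a' b \<and> op b (a + a') = op b a + op b a') \<and>
        (\<forall>c. \<forall>a\<in>T. \<forall>b\<in>T. op (sm c a) b = sm c (op a b) \<and> op a (sm c b) = sm c (op a b))) \<and>
     (let st = (\<lambda>a b. pr a b + su a b + sm q (bu a b)) in
      \<forall>a\<in>T. \<forall>b\<in>T. \<forall>c\<in>T.
        pr (pr a b) c = pr a (st b c) \<and>
        pr (su a b) c = su a (pr b c) \<and>
        su (st a b) c = su a (su b c) \<and>
        bu (su a b) c = su a (bu b c) \<and>
        bu (pr a b) c = bu a (su b c) \<and>
        pr (bu a b) c = bu a (pr b c) \<and>
        bu (bu a b) c = bu a (bu b c))"

definition differential_q_tridendriform ::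
  "('k \<Rightarrow> 'a \<Rightarrow> 'a) \<Rightarrow> 'a::ab_group_add set \<Rightarrow> ('a \<Rightarrow> 'a \<Rightarrow> 'a) \<Rightarrow> ('a \<Rightarrow> 'a \<Rightarrow> 'a)
     \<Rightarrow> ('a \<Rightarrow> 'a \<Rightarrow> 'a) \<Rightarrow> ('a \<Rightarrow> 'a) \<Rightarrow> 'k \<Rightarrow> 'k \<Rightarrow> bool" where
  "differential_q_tridendriform sm T pr su bu d q lam \<longleftrightarrow>
     q_tridendriform sm T pr su bu q \<and>
     (\<forall>a\<in>T. d a \<in> T) \<and>
     (\<forall>a\<in>T. \<forall>b\<in>T. d (a + b) = d a + d b) \<and>
     (\<forall>c. \<forall>a\<in>T. d (sm c a) = sm c (d a)) \<and>
     (\<forall>op\<in>{pr, su, bu}. \<forall>a\<in>T. \<forall>b\<in>T.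
        d (op a b) = op (d a) b + op a (d b) + sm lam (op (d a) (d b)))"

end

theory Submission
  imports Defs "HOL-Library.Multiset"
begin


lemma lookup_smul[simp]: "Poly_Mapping.lookup (smul c p) t = c * Poly_Mapping.lookup p t"
  unfolding smul_def by transfer (simp add: when_def)

lemma smul_add: "smul c (p + r) = smul c p + smul c r"
  by (rule poly_mapping_eqI) (simp add: lookup_add algebra_simps)
lemma smul_add_left: "smul (c + d) p = smul c p + smul d p"
  by (rule poly_mapping_eqI) (simp add: lookup_add algebra_simps)
lemma smul_smul[simp]: "smul c (smul d p) = smul (c * d) p"
  by (rule poly_mapping_eqI) (simp add: algebra_simps)
lemma smul_zero[simp]: "smul c 0 = 0"
  by (rule poly_mapping_eqI) simp
lemma smul_zero_left[simp]: "smul 0 p = 0"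
  by (rule poly_mapping_eqI) simp
lemma smul_one[simp]: "smul 1 p = p"
  by (rule poly_mapping_eqI) simp
lemma smul_single: "smul c (Poly_Mapping.single t a) = Poly_Mapping.single t (c * a)"
  by (rule poly_mapping_eqI) (simp add: lookup_single when_def)
lemma smul_sum: "smul c (sum f A) = (\<Sum>a\<in>A. smul c (f a))"
  by (induction A rule: infinite_finite_induct) (auto simp: smul_add)
lemma smul_uminus: "smul c (- p) = - smul c p"
  by (rule poly_mapping_eqI) simp
lemma keys_smul: "Poly_Mapping.keys (smul c p) \<subseteq> Poly_Mapping.keys p"
  by (auto simp: in_keys_iff)

lemma lin_ext_superset:
  assumes "finite A" "Poly_Mapping.keys p \<subseteq> A"
  shows "lin_ext f p = (\<Sum>t\<in>A. smul (Poly_Mapping.lookup p t) (f t))"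
  unfolding lin_ext_def using assms
  by (intro sum.mono_neutral_left) (auto simp: in_keys_iff)

lemma lin_ext_add: "lin_ext f (p + r) = lin_ext f p + lin_ext f r"
proof -
  let ?A = "Poly_Mapping.keys p \<union> Poly_Mapping.keys r"
  have "lin_ext f (p + r) = (\<Sum>t\<in>?A. smul (Poly_Mapping.lookup (p+r) t) (f t))"
    by (rule lin_ext_superset) (auto simp: keys_add)
  also have "\<dots> = (\<Sum>t\<in>?A. smul (Poly_Mapping.lookup p t) (f t)) + (\<Sum>t\<in>?A. smul (Poly_Mapping.lookup r t) (f t))"
    by (simp add: lookup_add smul_add_left sum.distrib)
  also have "\<dots> = lin_ext f p + lin_ext f r"
    by (subst (1 2) lin_ext_superset[where A = ?A]) auto
  finally show ?thesis .
qed

lemma lin_ext_zero[simp]: "lin_ext f 0 = 0"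
  by (simp add: lin_ext_def)

lemma lin_ext_smul: "lin_ext f (smul c p) = smul c (lin_ext f p)"
proof -
  have "lin_ext f (smul c p) = (\<Sum>t\<in>Poly_Mapping.keys p. smul (Poly_Mapping.lookup (smul c p) t) (f t))"
    by (rule lin_ext_superset) (auto simp: keys_smul[THEN subsetD])
  thus ?thesis by (simp add: lin_ext_def smul_sum)
qed

lemma lin_ext_sum: "lin_ext f (sum g A) = (\<Sum>a\<in>A. lin_ext f (g a))"
  by (induction A rule: infinite_finite_induct) (auto simp: lin_ext_add)

lemma lin_ext_single: "lin_ext f (Poly_Mapping.single t c) = smul c (f t)"
  by (cases "c = 0") (auto simp: lin_ext_def)

lemma lin_ext_single1[simp]: "lin_ext f (Poly_Mapping.single t 1) = f t"
  by (simp add: lin_ext_single)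

lemma lin_ext_cong: "(\<And>t. t \<in> Poly_Mapping.keys p \<Longrightarrow> f t = g t) \<Longrightarrow> lin_ext f p = lin_ext g p"
  by (simp add: lin_ext_def)

lemma lin_ext_fadd: "lin_ext (\<lambda>t. f t + g t) p = lin_ext f p + lin_ext g p"
  by (simp add: lin_ext_def smul_add sum.distrib)

lemma lin_ext_fsmul: "lin_ext (\<lambda>t. smul c (f t)) p = smul c (lin_ext f p)"
  by (simp add: lin_ext_def smul_sum mult.commute)

lemma lin_ext_fzero[simp]: "lin_ext (\<lambda>t. 0) p = 0"
  by (simp add: lin_ext_def)

lemma keys_lin_ext: "Poly_Mapping.keys (lin_ext f p) \<subseteq> (\<Union>t\<in>Poly_Mapping.keys p. Poly_Mapping.keys (f t))"
  unfolding lin_ext_def using keys_sum keys_smul by fastforce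

lemma lin_ext_expand: "lin_ext (\<lambda>t. Poly_Mapping.single t 1) p = p"
proof -
  have *: "finite I \<Longrightarrow> Poly_Mapping.lookup (\<Sum>i\<in>I. smul (Poly_Mapping.lookup p i) (Poly_Mapping.single i 1)) j =
            (if j \<in> I then Poly_Mapping.lookup p j else 0)" for I j
    by (induction I rule: finite_induct) (auto simp: lookup_single lookup_add when_def)
  show ?thesis unfolding lin_ext_def
    by (rule poly_mapping_eqI) (fastforce simp add: in_keys_iff *)
qed

lemma lin_ext_comp: "lin_ext F (lin_ext G p) = lin_ext (\<lambda>t. lin_ext F (G t)) p"
proof -
  have "lin_ext F (lin_ext G p) = (\<Sum>t\<in>Poly_Mapping.keys p. smul (Poly_Mapping.lookup p t) (lin_ext F (G t)))"
    by (simp only: lin_ext_def[of G p] lin_ext_sum lin_ext_smul)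
  then show ?thesis by (simp only: lin_ext_def[of "\<lambda>t. lin_ext F (G t)" p])
qed

lemma lin_ext_swap: "lin_ext (\<lambda>u. lin_ext (\<lambda>w. K u w) Q) P = lin_ext (\<lambda>w. lin_ext (\<lambda>u. K u w) P) Q"
  by (simp add: lin_ext_def smul_sum sum.swap[of _ "Poly_Mapping.keys Q"] mult.commute)

lemma bilin_ext_lin: "bilin_ext f p r = lin_ext (\<lambda>t. lin_ext (\<lambda>s. f t s) r) p"
  by (simp add: bilin_ext_def lin_ext_def smul_sum)

lemma graft_lin: "graft g p = lin_ext (\<lambda>t. Poly_Mapping.single (g t) 1) p"
  by (simp add: graft_def)

lemma lin_ext_graft[simp]: "lin_ext F (graft g P) = lin_ext (\<lambda>u. F (g u)) P"
  by (simp add: graft_def lin_ext_comp)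

lemma graft_lin_ext: "graft g (lin_ext F P) = lin_ext (\<lambda>u. graft g (F u)) P"
  by (simp add: graft_def lin_ext_comp)

lemma graft_single[simp]: "graft g (Poly_Mapping.single t 1) = Poly_Mapping.single (g t) 1"
  by (simp add: graft_def)

lemma graft_add[simp]: "graft g (p + r) = graft g p + graft g r"
  by (simp add: graft_def lin_ext_add)

lemma graft_smul[simp]: "graft g (smul c p) = smul c (graft g p)"
  by (simp add: graft_def lin_ext_smul)

lemma graft_zero[simp]: "graft g 0 = 0"
  by (simp add: graft_def)

lemma graft_graft[simp]: "graft h (graft g p) = graft (h \<circ> g) p"
  by (simp add: graft_def lin_ext_comp)

lemma keys_graft: "Poly_Mapping.keys (graft g p) \<subseteq> g ` Poly_Mapping.keys p"
  using keys_lin_ext[of "\<lambda>t. Poly_Mapping.single (g t) 1" p] by (auto simp: graft_def)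


lemma lin_ext_graft_out: "lin_ext (\<lambda>u. graft g (F u)) P = graft g (lin_ext F P)"
  by (simp add: graft_lin_ext)

lemma star_Leaf_left[simp]: "star q Leaf v = Poly_Mapping.single v 1"
  by (cases v) auto
lemma star_Leaf_right[simp]: "star q u Leaf = Poly_Mapping.single u 1"
  by (cases u) auto

lemma prec_N: "ts \<noteq> [] \<Longrightarrow> prec_t q (Node xs ts) v = graft (\<lambda>u. Node xs (butlast ts @ [u])) (star q (last ts) v)"
  by (cases v) auto
lemma succ_N: "ss \<noteq> [] \<Longrightarrow> succ_t q u (Node ys ss) = graft (\<lambda>w. Node ys (w # tl ss)) (star q u (hd ss))"
  by (cases u) auto

definition ASSOC :: "'k::comm_ring_1 \<Rightarrow> 'y vtree \<Rightarrow> 'y vtree \<Rightarrow> 'y vtree \<Rightarrow> bool" where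
  "ASSOC q a b c \<longleftrightarrow> lin_ext (\<lambda>u. star q u c) (star q a b) = lin_ext (\<lambda>v. star q a v) (star q b c)"

lemma ax1:
  assumes "ASSOC q la b c"
  shows "lin_ext (\<lambda>u. prec_t q u c) (prec_t q (Node xs (ba@[la])) b)
       = lin_ext (\<lambda>v. prec_t q (Node xs (ba@[la])) v) (star q b c)"
  using assms by (simp add: prec_N lin_ext_graft_out ASSOC_def)

lemma ax2:
  assumes "ASSOC q a hb c"
  shows "lin_ext (\<lambda>u. prec_t q u c) (succ_t q a (Node ys (hb # sb)))
       = lin_ext (\<lambda>v. succ_t q a v) (prec_t q (Node ys (hb # sb)) c)"
proof (cases sb rule: rev_exhaust)
  case Nil
  then show ?thesis using assms by (simp add: prec_N succ_N lin_ext_graft_out ASSOC_def)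
next
  case (snoc sb0 lb)
  then show ?thesis apply (simp add: prec_N succ_N)
    unfolding graft_def by (rule lin_ext_swap)
qed

lemma ax3:
  assumes "ASSOC q a b hc"
  shows "lin_ext (\<lambda>u. succ_t q u (Node zs (hc # rc))) (star q a b)
       = lin_ext (\<lambda>v. succ_t q a v) (succ_t q b (Node zs (hc # rc)))"
  using assms by (simp add: succ_N lin_ext_graft_out ASSOC_def)

lemma ax4:
  assumes "ASSOC q a hb hc"
  shows "lin_ext (\<lambda>u. bul_t q u (Node zs (hc # rc))) (succ_t q a (Node ys (hb # sb)))
       = lin_ext (\<lambda>v. succ_t q a v) (bul_t q (Node ys (hb # sb)) (Node zs (hc # rc)))"
proof (cases sb rule: rev_exhaust)
  case Nil
  then show ?thesis using assms by (simp add: succ_N lin_ext_graft_out ASSOC_def)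
next
  case (snoc sb0 lb)
  then show ?thesis apply (simp add: succ_N)
    unfolding graft_def by (rule lin_ext_swap)
qed

lemma ax5:
  assumes "ASSOC q la b hc"
  shows "lin_ext (\<lambda>u. bul_t q u (Node zs (hc # rc))) (prec_t q (Node xs (ba@[la])) b)
       = lin_ext (\<lambda>v. bul_t q (Node xs (ba@[la])) v) (succ_t q b (Node zs (hc # rc)))"
  using assms by (simp add: prec_N succ_N lin_ext_graft_out ASSOC_def)

lemma ax6:
  assumes "ASSOC q la hb c"
  shows "lin_ext (\<lambda>u. prec_t q u c) (bul_t q (Node xs (ba@[la])) (Node ys (hb # sb)))
       = lin_ext (\<lambda>v. bul_t q (Node xs (ba@[la])) v) (prec_t q (Node ys (hb # sb)) c)"
proof (cases sb rule: rev_exhaust)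
  case Nil
  then show ?thesis using assms by (simp add: prec_N lin_ext_graft_out ASSOC_def)
next
  case (snoc sb0 lb)
  then show ?thesis apply (simp add: prec_N butlast_append)
    unfolding graft_def by (rule lin_ext_swap)
qed

lemma ax7:
  assumes "ASSOC q la hb hc"
  shows "lin_ext (\<lambda>u. bul_t q u (Node zs (hc # rc))) (bul_t q (Node xs (ba@[la])) (Node ys (hb # sb)))
       = lin_ext (\<lambda>v. bul_t q (Node xs (ba@[la])) v) (bul_t q (Node ys (hb # sb)) (Node zs (hc # rc)))"
proof (cases sb rule: rev_exhaust)
  case Nil
  then show ?thesis using assms by (simp add: lin_ext_graft_out ASSOC_def)
next
  case (snoc sb0 lb)
  then show ?thesis apply (simp add: butlast_append)
    unfolding graft_def by (rule lin_ext_swap)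
qed

lemma wf_R: "wf_vtree Y (Node xs ts) \<Longrightarrow> wf_vtree Y u \<Longrightarrow> wf_vtree Y (Node xs (butlast ts @ [u]))"
  by (auto dest: in_set_butlastD)
lemma wf_L: "wf_vtree Y (Node ys ss) \<Longrightarrow> wf_vtree Y u \<Longrightarrow> wf_vtree Y (Node ys (u # tl ss))"
  by (cases ss) auto
lemma wf_M: "wf_vtree Y (Node xs ts) \<Longrightarrow> wf_vtree Y (Node ys ss) \<Longrightarrow> wf_vtree Y u \<Longrightarrow>
   wf_vtree Y (Node (xs @ ys) (butlast ts @ u # tl ss))"
  by (cases ss) (auto dest: in_set_butlastD)

lemma keys_graft_sub: "Poly_Mapping.keys P \<subseteq> A \<Longrightarrow> (\<And>u. u \<in> A \<Longrightarrow> g u \<in> B) \<Longrightarrow> Poly_Mapping.keys (graft g P) \<subseteq> B"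
  using keys_graft[of g P] by blast

lemma keys_add_sub: "Poly_Mapping.keys P \<subseteq> A \<Longrightarrow> Poly_Mapping.keys Q \<subseteq> A \<Longrightarrow> Poly_Mapping.keys (P + Q) \<subseteq> A"
  using keys_add[of P Q] by blast

lemma keys_smul_sub: "Poly_Mapping.keys P \<subseteq> A \<Longrightarrow> Poly_Mapping.keys (smul c P) \<subseteq> A"
  using keys_smul[of c P] by blast

lemma keys_star_wf:
  "wf_vtree Y a \<Longrightarrow> wf_vtree Y b \<Longrightarrow>
   Poly_Mapping.keys (star q a b) \<subseteq> {t. wf_vtree Y t \<and> (t = Leaf \<longrightarrow> a = Leaf \<and> b = Leaf)}"
proof (induction q a b rule: star.induct)
  case (4 q xs ts ys ss)
  have ne: "ts \<noteq> []" "ss \<noteq> []" using "4.prems" by auto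
  have lt: "wf_vtree Y (last ts)" "wf_vtree Y (hd ss)" using "4.prems" ne by auto
  let ?W = "{t. wf_vtree Y t \<and> (t = Leaf \<longrightarrow> Node xs ts = Leaf \<and> Node ys ss = Leaf)}"
  have k1: "Poly_Mapping.keys (star q (last ts) (Node ys ss)) \<subseteq> {t. wf_vtree Y t}"
    using "4.IH"(1) ne lt "4.prems" by blast
  have k2: "Poly_Mapping.keys (star q (Node xs ts) (hd ss)) \<subseteq> {t. wf_vtree Y t}"
    using "4.IH"(2) ne lt "4.prems" by blast
  have k3: "Poly_Mapping.keys (star q (last ts) (hd ss)) \<subseteq> {t. wf_vtree Y t}"
    using "4.IH"(3) ne lt "4.prems" by blast
  show ?case using ne
    apply simp
    apply (intro keys_add_sub keys_smul_sub)
      apply (rule keys_graft_sub[OF k1]) apply (simp only: mem_Collect_eq) apply (intro conjI)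
       apply (rule wf_R) using "4.prems" apply simp apply simp apply simp
     apply (rule keys_graft_sub[OF k2]) apply (simp only: mem_Collect_eq) apply (intro conjI)
      apply (rule wf_L) using "4.prems" apply simp apply simp apply simp
    apply (rule keys_graft_sub[OF k3]) apply (simp only: mem_Collect_eq) apply (intro conjI)
     apply (rule wf_M) using "4.prems" apply simp using "4.prems" apply simp apply simp apply simp
    done
qed auto

lemma keys_ops_wf:
  assumes "wf_vtree Y a" "wf_vtree Y b"
  shows "Poly_Mapping.keys (prec_t q a b) \<subseteq> {t. wf_vtree Y t \<and> t \<noteq> Leaf}"
    "Poly_Mapping.keys (succ_t q a b) \<subseteq> {t. wf_vtree Y t \<and> t \<noteq> Leaf}"
    "Poly_Mapping.keys (bul_t q a b) \<subseteq> {t. wf_vtree Y t \<and> t \<noteq> Leaf}"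
proof -
  show "Poly_Mapping.keys (prec_t q a b) \<subseteq> {t. wf_vtree Y t \<and> t \<noteq> Leaf}"
  proof (cases a)
    case (Node xs ts)
    then have ne: "ts \<noteq> []" using assms by auto
    have k: "Poly_Mapping.keys (star q (last ts) b) \<subseteq> {t. wf_vtree Y t}"
      using keys_star_wf[of Y "last ts" b q] assms Node ne by auto
    show ?thesis using Node ne
      apply (simp add: prec_N)
      apply (rule keys_graft_sub[OF k])
      apply (simp only: mem_Collect_eq)
      apply (intro conjI)
       apply (rule wf_R) using assms Node apply simp_all
      done
  qed simp
  show "Poly_Mapping.keys (succ_t q a b) \<subseteq> {t. wf_vtree Y t \<and> t \<noteq> Leaf}"
  proof (cases b)
    case (Node ys ss)
    then have ne: "ss \<noteq> []" using assms by auto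
    have k: "Poly_Mapping.keys (star q a (hd ss)) \<subseteq> {t. wf_vtree Y t}"
      using keys_star_wf[of Y a "hd ss" q] assms Node ne by auto
    show ?thesis using Node ne
      apply (simp add: succ_N)
      apply (rule keys_graft_sub[OF k])
      apply (simp only: mem_Collect_eq)
      apply (intro conjI)
       apply (rule wf_L) using assms Node apply simp_all
      done
  qed simp
  show "Poly_Mapping.keys (bul_t q a b) \<subseteq> {t. wf_vtree Y t \<and> t \<noteq> Leaf}"
  proof (cases a)
    case (Node xs ts)
    note a = this
    show ?thesis
    proof (cases b)
      case (Node ys ss)
      then have ne: "ts \<noteq> []" "ss \<noteq> []" using assms a by auto
      have k: "Poly_Mapping.keys (star q (last ts) (hd ss)) \<subseteq> {t. wf_vtree Y t}"
        using keys_star_wf[of Y "last ts" "hd ss" q] assms a Node ne by auto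
      show ?thesis using Node a ne
        apply simp
        apply (rule keys_graft_sub[OF k])
        apply (simp only: mem_Collect_eq)
        apply (intro conjI)
         apply (rule wf_M) using assms a Node apply simp_all
        done
    qed (simp add: a)
  qed simp
qed

definition stt :: "'k::comm_ring_1 \<Rightarrow> 'y vtree \<Rightarrow> 'y vtree \<Rightarrow> ('y, 'k) lin" where
  "stt q a b = prec_t q a b + succ_t q a b + smul q (bul_t q a b)"

lemma stt_eta: "stt q a = (\<lambda>v. prec_t q a v + succ_t q a v + smul q (bul_t q a v))"
  by (rule ext) (simp add: stt_def)

lemma star_stt: "wf_vtree Y a \<Longrightarrow> wf_vtree Y b \<Longrightarrow> a \<noteq> Leaf \<Longrightarrow> b \<noteq> Leaf \<Longrightarrow> star q a b = stt q a b"
  by (cases a; cases b) (auto simp: stt_def)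

lemma ASSOC_Leaf: "ASSOC q Leaf b c" "ASSOC q a Leaf c" "ASSOC q a b Leaf"
  by (simp_all add: ASSOC_def lin_ext_expand)

lemma assoc: "wf_vtree Y a \<Longrightarrow> wf_vtree Y b \<Longrightarrow> wf_vtree Y c \<Longrightarrow> ASSOC q a b c"
proof (induction "size a + size b + size c" arbitrary: a b c rule: less_induct)
  case less
  show ?case
  proof (cases "a = Leaf \<or> b = Leaf \<or> c = Leaf")
    case True
    then show ?thesis using ASSOC_Leaf by blast
  next
    case False
    then obtain xs ts ys ss zs rs where abc: "a = Node xs ts" "b = Node ys ss" "c = Node zs rs"
      by (metis vtree.exhaust)
    have ne: "ts \<noteq> []" "ss \<noteq> []" "rs \<noteq> []" using less.prems abc by auto
    obtain ba la where ts: "ts = ba @ [la]" using ne(1) by (metis rev_exhaust)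
    obtain hb sb where ss: "ss = hb # sb" using ne(2) by (metis list.exhaust)
    obtain hc rc where rs: "rs = hc # rc" using ne(3) by (metis list.exhaust)
    have wla: "wf_vtree Y la" using less.prems abc ts by auto
    have whb: "wf_vtree Y hb" using less.prems abc ss by auto
    have whc: "wf_vtree Y hc" using less.prems abc rs by auto
    have sla: "size la < size a" using abc ts vtree_size_mem[of la ts xs] by simp
    have shb: "size hb < size b" using abc ss vtree_size_mem[of hb ss ys] by simp
    have shc: "size hc < size c" using abc rs vtree_size_mem[of hc rs zs] by simp
    note IH = less.hyps
    have A1: "ASSOC q la b c" using IH[of la b c] sla wla less.prems by simp
    have A2: "ASSOC q a hb c" using IH[of a hb c] shb whb less.prems by simp
    have A3: "ASSOC q a b hc" using IH[of a b hc] shc whc less.prems by simp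
    have A4: "ASSOC q a hb hc" using IH[of a hb hc] shb shc whb whc less.prems by simp
    have A5: "ASSOC q la b hc" using IH[of la b hc] sla shc wla whc less.prems by simp
    have A6: "ASSOC q la hb c" using IH[of la hb c] sla shb wla whb less.prems by simp
    have A7: "ASSOC q la hb hc" using IH[of la hb hc] sla shb shc wla whb whc less.prems by simp
    have aeq: "a = Node xs (ba @ [la])" and beq: "b = Node ys (hb # sb)" and ceq: "c = Node zs (hc # rc)"
      using abc ts ss rs by auto
    note E1 = ax1[OF A1, where xs=xs and ba=ba, folded aeq]
    note E2 = ax2[OF A2, where sb=sb and ys=ys, folded beq]
    note E3 = ax3[OF A3, where zs=zs and rc=rc, folded ceq]
    note E4 = ax4[OF A4, where zs=zs and rc=rc and sb=sb and ys=ys, folded beq ceq]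
    note E5 = ax5[OF A5, where zs=zs and rc=rc and xs=xs and ba=ba, folded aeq ceq]
    note E6 = ax6[OF A6, where xs=xs and ba=ba and sb=sb and ys=ys, folded aeq beq]
    note E7 = ax7[OF A7, where zs=zs and rc=rc and xs=xs and ba=ba and sb=sb and ys=ys, folded aeq beq ceq]
    have wa: "wf_vtree Y a" "wf_vtree Y b" "wf_vtree Y c" using less.prems by auto
    have nl: "a \<noteq> Leaf" "b \<noteq> Leaf" "c \<noteq> Leaf" using False by auto
    have sab: "star q a b = stt q a b" and sbc: "star q b c = stt q b c"
      using star_stt wa nl by blast+
    have L: "lin_ext (\<lambda>u. star q u c) (star q a b) = lin_ext (\<lambda>u. stt q u c) (stt q a b)"
    proof -
      have "lin_ext (\<lambda>u. star q u c) (star q a b) = lin_ext (\<lambda>u. stt q u c) (star q a b)"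
        apply (rule lin_ext_cong)
        apply (rule star_stt[of Y])
        using keys_star_wf[of Y a b q] wa nl by auto
      then show ?thesis by (simp add: sab)
    qed
    have R: "lin_ext (\<lambda>v. star q a v) (star q b c) = lin_ext (\<lambda>v. stt q a v) (stt q b c)"
    proof -
      have "lin_ext (\<lambda>v. star q a v) (star q b c) = lin_ext (\<lambda>v. stt q a v) (star q b c)"
        apply (rule lin_ext_cong)
        apply (rule star_stt[of Y])
        using keys_star_wf[of Y b c q] wa nl by auto
      then show ?thesis by (simp add: sbc)
    qed
    note ex = stt_def stt_eta lin_ext_add lin_ext_smul lin_ext_fadd lin_ext_fsmul smul_add
    show ?thesis unfolding ASSOC_def L R
      using E1 E2 E3 E4 E5 E6 E7 unfolding sab sbc
      by (simp add: ex add_ac)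
  qed
qed


fun ents :: "'a vtree \<Rightarrow> 'a list" where
  "ents Leaf = []"
| "ents (Node ys ts) = ys @ concat (map ents ts)"

lemma nent_ents: "nent t = length (ents t)"
proof (induction t)
  case (Node ys ts)
  then show ?case by (simp add: length_concat o_def cong: map_cong)
qed simp

lemma sum_nent: "sum_list (map nent ts) = length (concat (map ents ts))"
  by (simp add: length_concat nent_ents[abs_def] o_def)

lemma set_vtree_ents: "set_vtree t = set (ents t)"
  by (induction t) auto

fun enum_tree :: "nat \<Rightarrow> 'a vtree \<Rightarrow> ('a \<times> nat) vtree"
and enum_forest :: "nat \<Rightarrow> 'a vtree list \<Rightarrow> ('a \<times> nat) vtree list" where
  "enum_tree off Leaf = Leaf"
| "enum_tree off (Node ys ts) = Node (zip ys [off..<off + length ys]) (enum_forest (off + length ys) ts)"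
| "enum_forest off [] = []"
| "enum_forest off (t # ts) = enum_tree off t # enum_forest (off + nent t) ts"

definition gS :: "nat set \<Rightarrow> ('x \<times> nat) \<times> nat \<Rightarrow> 'x \<times> nat" where
  "gS S l = (if snd l \<in> S then (fst (fst l), Suc (snd (fst l))) else fst l)"

lemma enum_fst:
  fixes t :: "'a vtree" and ts :: "'a vtree list"
  shows
  "map_vtree fst (enum_tree off t) = t"
  "map (map_vtree fst) (enum_forest off ts) = ts"
  by (induction off t and off ts rule: enum_tree_enum_forest.induct) auto

lemma upt_split3: "[a..<a + (m + k)] = [a..<a + m] @ [a + m..<a + m + k]"
  by (metis add.assoc le_add1 upt_add_eq_append)

lemma enum_ents:
  fixes t :: "'a vtree" and ts :: "'a vtree list"
  shows
  "ents (enum_tree off t) = zip (ents t) [off..<off + nent t]"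
  "concat (map ents (enum_forest off ts)) = zip (concat (map ents ts)) [off..<off + sum_list (map nent ts)]"
proof (induction off t and off ts rule: enum_tree_enum_forest.induct)
  case (2 off ys ts)
  then show ?case
    by (simp add: upt_split3 zip_append)
next
  case (4 off t ts)
  then show ?case
    by (simp add: upt_split3 zip_append nent_ents)
qed auto

lemma enum_ents_snd: "map snd (ents (enum_tree off t)) = [off..<off + nent t]"
  by (simp add: enum_ents nent_ents)

lemma shift_enum:
  fixes t :: "('x \<times> nat) vtree" and ts :: "('x \<times> nat) vtree list"
  shows
  "shift_tree S off t = map_vtree (gS S) (enum_tree off t)"
  "shift_forest S off ts = map (map_vtree (gS S)) (enum_forest off ts)"
proof (induction S off t and S off ts rule: shift_tree_shift_forest.induct)
  case (2 S off ys ts)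
  then show ?case
    by (auto intro!: nth_equalityI simp: gS_def)
qed auto

lemma ents_map: "ents (map_vtree f t) = map f (ents t)"
  by (induction t) (simp_all add: map_concat o_def cong: map_cong)

lemma nent_map: "nent (map_vtree f t) = nent t"
  by (simp add: nent_ents ents_map)  

lemma enum_map:
  fixes t :: "'a vtree" and ts :: "'a vtree list"
  shows "enum_tree off (map_vtree f t) = map_vtree (map_prod f id) (enum_tree off t)"
    "enum_forest off (map (map_vtree f) ts) = map (map_vtree (map_prod f id)) (enum_forest off ts)"
  by (induction off t and off ts rule: enum_tree_enum_forest.induct) (auto simp: zip_map1 nent_map)

lemma enum_h:
  fixes t :: "'a vtree" and ts :: "'a vtree list"
  shows "(\<forall>p<nent t. h (ents t ! p) = off + p) \<Longrightarrow> enum_tree off t = map_vtree (\<lambda>l. (l, h l)) t"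
    "(\<forall>p<length (concat (map ents ts)). h (concat (map ents ts) ! p) = off + p) \<Longrightarrow>
      enum_forest off ts = map (map_vtree (\<lambda>l. (l, h l))) ts"
proof (induction off t and off ts rule: enum_tree_enum_forest.induct)
  case (2 off ys ts)
  have a: "zip ys [off..<off + length ys] = map (\<lambda>l. (l, h l)) ys"
  proof (rule nth_equalityI)
    fix i assume "i < length (zip ys [off..<off + length ys])"
    then have i: "i < length ys" by simp
    have "h ((ys @ concat (map ents ts)) ! i) = off + i" using "2.prems" i by (auto simp: nent_ents)
    then show "zip ys [off..<off + length ys] ! i = map (\<lambda>l. (l, h l)) ys ! i" using i by (simp add: nth_append)
  qed simp
  have "\<forall>p<length (concat (map ents ts)). h (concat (map ents ts) ! p) = off + length ys + p"
  proof (intro allI impI)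
    fix p assume p: "p < length (concat (map ents ts))"
    have "h ((ys @ concat (map ents ts)) ! (length ys + p)) = off + (length ys + p)"
      using "2.prems"[rule_format, of "length ys + p"] p by (simp add: nent_ents)
    then show "h (concat (map ents ts) ! p) = off + length ys + p" by (simp add: nth_append)
  qed
  then show ?case using "2.IH" a by simp
next
  case (4 off t ts)
  have "\<forall>p<nent t. h (ents t ! p) = off + p"
  proof (intro allI impI)
    fix p assume p: "p < nent t"
    then show "h (ents t ! p) = off + p" using "4.prems"[rule_format, of p] p by (simp add: nent_ents nth_append)
  qed
  moreover have "\<forall>p<length (concat (map ents ts)). h (concat (map ents ts) ! p) = off + nent t + p"
  proof (intro allI impI)
    fix p assume p: "p < length (concat (map ents ts))"
    have "h ((ents t @ concat (map ents ts)) ! (nent t + p)) = off + (nent t + p)"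
      using "4.prems"[rule_format, of "nent t + p"] p by (simp add: nent_ents)
    then show "h (concat (map ents ts) ! p) = off + nent t + p" by (simp add: nth_append nent_ents)
  qed
  ultimately show ?case using "4.IH" by simp
qed auto

lemma shift_cong_gen:
  fixes t :: "('x \<times> nat) vtree" and ts :: "('x \<times> nat) vtree list"
  shows "\<forall>S' off'. (\<forall>i<nent t. off + i \<in> S \<longleftrightarrow> off' + i \<in> S') \<longrightarrow> shift_tree S off t = shift_tree S' off' t"
    "\<forall>S' off'. (\<forall>i<sum_list (map nent ts). off + i \<in> S \<longleftrightarrow> off' + i \<in> S') \<longrightarrow> shift_forest S off ts = shift_forest S' off' ts"
proof (induction S off t and S off ts rule: shift_tree_shift_forest.induct)
  case (2 S off ys ts)
  show ?case
  proof (intro allI impI)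
    fix S' off' assume H: "\<forall>i<nent (Node ys ts). off + i \<in> S \<longleftrightarrow> off' + i \<in> S'"
    have "\<forall>i<sum_list (map nent ts). off + length ys + i \<in> S \<longleftrightarrow> off' + length ys + i \<in> S'"
    proof (intro allI impI)
      fix i assume "i < sum_list (map nent ts)"
      then show "off + length ys + i \<in> S \<longleftrightarrow> off' + length ys + i \<in> S'"
        using H[rule_format, of "length ys + i"] by (simp add: add.assoc)
    qed
    then have "shift_forest S (off + length ys) ts = shift_forest S' (off' + length ys) ts"
      using "2.IH" by blast
    moreover have "\<forall>i<length ys. off + i \<in> S \<longleftrightarrow> off' + i \<in> S'" using H by simp
    ultimately show "shift_tree S off (Node ys ts) = shift_tree S' off' (Node ys ts)"
      by simp
  qed
next
  case (4 S off t ts)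
  show ?case
  proof (intro allI impI)
    fix S' off' assume H: "\<forall>i<sum_list (map nent (t # ts)). off + i \<in> S \<longleftrightarrow> off' + i \<in> S'"
    have "\<forall>i<sum_list (map nent ts). off + nent t + i \<in> S \<longleftrightarrow> off' + nent t + i \<in> S'"
    proof (intro allI impI)
      fix i assume "i < sum_list (map nent ts)"
      then show "off + nent t + i \<in> S \<longleftrightarrow> off' + nent t + i \<in> S'"
        using H[rule_format, of "nent t + i"] by (simp add: add.assoc)
    qed
    then have "shift_forest S (off + nent t) ts = shift_forest S' (off' + nent t) ts"
      using "4.IH" by blast
    moreover have "shift_tree S off t = shift_tree S' off' t" using "4.IH" H by simp
    ultimately show "shift_forest S off (t # ts) = shift_forest S' off' (t # ts)"
      by simp
  qed
qed auto

lemma shift_cong: "(\<And>i. i < nent t \<Longrightarrow> off + i \<in> S \<longleftrightarrow> off' + i \<in> S') \<Longrightarrow> shift_tree S off t = shift_tree S' off' t"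
  using shift_cong_gen(1) by blast

lemma gS_empty[simp]: "gS {} = fst"
  by (rule ext) (simp add: gS_def)

lemma shift_empty[simp]: "shift_tree {} off t = t"
  by (simp add: shift_enum enum_fst)

lemma wf_map: "wf_vtree Y (map_vtree f t) = wf_vtree (f -` Y) t"
  by (induction t) auto

lemma wf_mono: "A \<subseteq> B \<Longrightarrow> wf_vtree A t \<Longrightarrow> wf_vtree B t"
  by (induction t) auto

lemma wf_shift:
  assumes "wf_vtree (X \<times> (UNIV :: nat set)) t"
  shows "wf_vtree (X \<times> (UNIV :: nat set)) (shift_tree S off t)"
proof -
  have "wf_vtree (fst -` (X \<times> UNIV)) (enum_tree off t)"
    using assms enum_fst(1)[of off t] wf_map by metis
  then have "wf_vtree (gS S -` (X \<times> UNIV)) (enum_tree off t)"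
    by (rule wf_mono[rotated]) (auto simp: gS_def)
  then show ?thesis by (simp add: shift_enum wf_map)
qed

lemma shift_Leaf: "shift_tree S off t = Leaf \<longleftrightarrow> t = Leaf"
  by (cases t) auto


definition gmap :: "('a \<Rightarrow> 'b) \<Rightarrow> ('a \<Rightarrow>\<^sub>0 'k::comm_ring_1) \<Rightarrow> ('b \<Rightarrow>\<^sub>0 'k)" where
  "gmap h P = lin_ext (\<lambda>t. Poly_Mapping.single (h t) 1) P"

lemma gmap_graft[simp]: "gmap h (graft g X) = gmap (h \<circ> g) X"
  by (simp add: gmap_def graft_def lin_ext_comp)
lemma graft_gmap[simp]: "graft g (gmap h X) = gmap (g \<circ> h) X"
  by (simp add: gmap_def graft_def lin_ext_comp)
lemma gmap_add[simp]: "gmap h (X + Y) = gmap h X + gmap h Y"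
  by (simp add: gmap_def lin_ext_add)
lemma gmap_smul[simp]: "gmap h (smul c X) = smul c (gmap h X)"
  by (simp add: gmap_def lin_ext_smul)
lemma gmap_zero[simp]: "gmap h 0 = 0"
  by (simp add: gmap_def)
lemma gmap_single[simp]: "gmap h (Poly_Mapping.single t 1) = Poly_Mapping.single (h t) 1"
  by (simp add: gmap_def)

lemma star_map: "star q (map_vtree f a) (map_vtree f b) = gmap (map_vtree f) (star q a b)"
proof (induction q a b rule: star.induct)
  case (4 q xs ts ys ss)
  show ?case
  proof (cases "ts = [] \<or> ss = []")
    case True
    then show ?thesis by auto
  next
    case False
    then have ne: "ts \<noteq> []" "ss \<noteq> []" by auto
    have IH1: "star q (map_vtree f (last ts)) (Node (map f ys) (map (map_vtree f) ss)) = gmap (map_vtree f) (star q (last ts) (Node ys ss))"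
      using "4.IH"(1) False by simp
    have IH2: "star q (Node (map f xs) (map (map_vtree f) ts)) (map_vtree f (hd ss)) = gmap (map_vtree f) (star q (Node xs ts) (hd ss))"
      using "4.IH"(2) False by simp
    have IH3: "star q (map_vtree f (last ts)) (map_vtree f (hd ss)) = gmap (map_vtree f) (star q (last ts) (hd ss))"
      using "4.IH"(3) False by simp
    show ?thesis using ne
      by (simp add: last_map hd_map IH1 IH2 IH3 o_def map_butlast[symmetric] map_tl[symmetric])
  qed
qed auto

definition opk :: "nat \<Rightarrow> 'k::comm_ring_1 \<Rightarrow> 'y vtree \<Rightarrow> 'y vtree \<Rightarrow> ('y, 'k) lin" where
  "opk k q = (if k = 0 then prec_t q else if k = 1 then succ_t q else bul_t q)"

definition rootok :: "'y vtree \<Rightarrow> bool" where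
  "rootok t = (case t of Leaf \<Rightarrow> True | Node xs ts \<Rightarrow> ts \<noteq> [])"

lemma rootok_map[simp]: "rootok (map_vtree f t) = rootok t"
  by (cases t) (auto simp: rootok_def)

lemma enum_forest_Nil[simp]: "enum_forest off ts = [] \<longleftrightarrow> ts = []"
  by (cases ts) auto

lemma rootok_enum[simp]: "rootok (enum_tree off t) = rootok t"
  by (cases t) (auto simp: rootok_def)

lemma rootok_wf: "wf_vtree Y t \<Longrightarrow> rootok t"
  by (cases t) (auto simp: rootok_def)

lemma opk_map:
  assumes "rootok a" "rootok b"
  shows "opk k q (map_vtree f a) (map_vtree f b) = gmap (map_vtree f) (opk k q a b)"
proof (cases a; cases b)
  fix xs ts ys ss assume ab: "a = Node xs ts" "b = Node ys ss"
  show ?thesis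
  proof (cases "ts = [] \<or> ss = []")
    case True
    then show ?thesis using ab assms by (auto simp: rootok_def)
  next
    case False
    then have ne: "ts \<noteq> []" "ss \<noteq> []" by auto
    have I1: "star q (map_vtree f (last ts)) (Node (map f ys) (map (map_vtree f) ss)) = gmap (map_vtree f) (star q (last ts) (Node ys ss))"
      using star_map[of q f "last ts" "Node ys ss"] by simp
    have I2: "star q (Node (map f xs) (map (map_vtree f) ts)) (map_vtree f (hd ss)) = gmap (map_vtree f) (star q (Node xs ts) (hd ss))"
      using star_map[of q f "Node xs ts" "hd ss"] by simp
    show ?thesis using ne ab
      by (simp add: opk_def last_map hd_map I1 I2 star_map o_def map_butlast[symmetric] map_tl[symmetric])
  qed
qed (auto simp: opk_def)

lemma keys_graft_mem: "u \<in> Poly_Mapping.keys (graft g P) \<Longrightarrow> \<exists>v \<in> Poly_Mapping.keys P. u = g v"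
  using keys_graft by fastforce

lemma keys_add3: "u \<in> Poly_Mapping.keys (A + B + smul c C) \<Longrightarrow>
   u \<in> Poly_Mapping.keys A \<or> u \<in> Poly_Mapping.keys B \<or> u \<in> Poly_Mapping.keys C"
  using keys_add[of "A + B" "smul c C"] keys_add[of A B] keys_smul[of c C] by blast

lemma star_mset: "u \<in> Poly_Mapping.keys (star q a b) \<Longrightarrow> mset (ents u) = mset (ents a) + mset (ents b)"
proof (induction q a b arbitrary: u rule: star.induct)
  case (4 q xs ts ys ss)
  have ne: "ts \<noteq> []" "ss \<noteq> []" using "4.prems" by (auto split: if_splits)
  obtain ba la where ts: "ts = ba @ [la]" using ne(1) by (metis rev_exhaust)
  obtain hb sb where ss: "ss = hb # sb" using ne(2) by (metis list.exhaust)
  have k: "u \<in> Poly_Mapping.keys (graft (\<lambda>u. Node xs (butlast ts @ [u])) (star q (last ts) (Node ys ss))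
     + graft (\<lambda>u. Node ys (u # tl ss)) (star q (Node xs ts) (hd ss))
     + smul q (graft (\<lambda>u. Node (xs @ ys) (butlast ts @ [u] @ tl ss)) (star q (last ts) (hd ss))))"
    using "4.prems" ne by simp
  from keys_add3[OF k] consider
      (A) "u \<in> Poly_Mapping.keys (graft (\<lambda>u. Node xs (butlast ts @ [u])) (star q (last ts) (Node ys ss)))"
    | (B) "u \<in> Poly_Mapping.keys (graft (\<lambda>u. Node ys (u # tl ss)) (star q (Node xs ts) (hd ss)))"
    | (C) "u \<in> Poly_Mapping.keys (graft (\<lambda>u. Node (xs @ ys) (butlast ts @ [u] @ tl ss)) (star q (last ts) (hd ss)))"
    by blast
  then show ?case
  proof cases
    case A
    then obtain v where v: "v \<in> Poly_Mapping.keys (star q (last ts) (Node ys ss))" "u = Node xs (butlast ts @ [v])"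
      using keys_graft_mem by blast
    then show ?thesis using "4.IH"(1)[OF _ v(1)] ne ts by simp
  next
    case B
    then obtain v where v: "v \<in> Poly_Mapping.keys (star q (Node xs ts) (hd ss))" "u = Node ys (v # tl ss)"
      using keys_graft_mem by blast
    then show ?thesis using "4.IH"(2)[OF _ v(1)] ne ss by (simp add: add_ac)
  next
    case C
    then obtain v where v: "v \<in> Poly_Mapping.keys (star q (last ts) (hd ss))" "u = Node (xs @ ys) (butlast ts @ [v] @ tl ss)"
      using keys_graft_mem by blast
    then show ?thesis using "4.IH"(3)[OF _ v(1)] ne ts ss by (simp add: add_ac)
  qed
qed auto

lemma opk_mset:
  assumes "rootok a" "rootok b" "u \<in> Poly_Mapping.keys (opk k q a b)"
  shows "mset (ents u) = mset (ents a) + mset (ents b)"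
proof (cases a)
  case Leaf
  then show ?thesis using assms by (cases b) (auto simp: opk_def split: if_splits)
next
  case (Node xs ts)
  note a = this
  show ?thesis
  proof (cases b)
    case Leaf
    then show ?thesis using assms a by (auto simp: opk_def split: if_splits)
  next
    case (Node ys ss)
    have ne: "ts \<noteq> []" "ss \<noteq> []" using assms a Node by (auto simp: rootok_def)
    obtain ba la where ts: "ts = ba @ [la]" using ne(1) by (metis rev_exhaust)
    obtain hb sb where ss: "ss = hb # sb" using ne(2) by (metis list.exhaust)
    consider "k = 0" | "k = 1" | "k \<noteq> 0 \<and> k \<noteq> 1" by blast
    then show ?thesis
    proof cases
      case 1
      then obtain v where v: "v \<in> Poly_Mapping.keys (star q la b)" "u = Node xs (ba @ [v])"
        using keys_graft_mem assms(3) a Node ts by (fastforce simp: opk_def)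
      then show ?thesis using star_mset[OF v(1)] a ts by simp
    next
      case 2
      then obtain v where v: "v \<in> Poly_Mapping.keys (star q a hb)" "u = Node ys (v # sb)"
        using keys_graft_mem assms(3) a Node ss by (fastforce simp: opk_def)
      then show ?thesis using star_mset[OF v(1)] Node ss by (simp add: add_ac)
    next
      case 3
      then obtain v where v: "v \<in> Poly_Mapping.keys (star q la hb)" "u = Node (xs @ ys) (ba @ [v] @ sb)"
        using keys_graft_mem assms(3) a Node ts ss by (fastforce simp: opk_def)
      then show ?thesis using star_mset[OF v(1)] a Node ts ss by (simp add: add_ac)
    qed
  qed
qed

lemma d_tree_tagged:
  fixes u :: "(('x \<times> nat) \<times> nat) vtree" and lam :: "'k::comm_ring_1"
  assumes dist: "distinct (map snd (ents u))"
  shows "d_tree lam (map_vtree fst u) = (\<Sum>S\<in>Pow (set (map snd (ents u))) - {{}}.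
            smul (lam ^ (card S - 1)) (Poly_Mapping.single (map_vtree (gS S) u) 1))"
proof -
  define T where "T = map snd (ents u)"
  define n where "n = length T"
  have nn: "nent u = n" by (simp add: T_def n_def nent_ents)
  have inj: "inj_on (nth T) {..<n}" using dist by (simp add: T_def n_def inj_on_nth)
  define h where "h l = the_inv_into {..<n} (nth T) (snd l)" for l :: "('x \<times> nat) \<times> nat"
  have hp: "h (ents u ! p) = p" if "p < n" for p
  proof -
    have "snd (ents u ! p) = T ! p" using that by (simp add: T_def n_def)
    then show ?thesis using the_inv_into_f_f[OF inj] that by (simp add: h_def)
  qed
  have en: "enum_tree 0 u = map_vtree (\<lambda>l. (l, h l)) u"
    by (rule enum_h(1)) (simp add: nn hp)
  have sh: "shift_tree S 0 (map_vtree fst u) = map_vtree (gS (nth T ` S)) u" if S: "S \<subseteq> {..<n}" for S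
  proof -
    have "shift_tree S 0 (map_vtree fst u) = map_vtree (gS S \<circ> map_prod fst id \<circ> (\<lambda>l. (l, h l))) u"
      by (simp add: shift_enum enum_map en vtree.map_comp comp_assoc)
    also have "\<dots> = map_vtree (gS (nth T ` S)) u"
    proof (rule vtree.map_cong0)
      fix l assume "l \<in> set_vtree u"
      then obtain p where p: "p < n" "l = ents u ! p"
        by (auto simp: set_vtree_ents in_set_conv_nth T_def n_def)
      have "snd l = T ! p" using p by (simp add: T_def n_def)
      moreover have "T ! p \<in> nth T ` S \<longleftrightarrow> p \<in> S" using inj S p(1)
        by (auto simp: inj_on_image_mem_iff)
      ultimately show "(gS S \<circ> map_prod fst id \<circ> (\<lambda>l. (l, h l))) l = gS (nth T ` S) l"
        using hp[OF p(1)] p by (simp add: gS_def)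
    qed
    finally show ?thesis .
  qed
  have "d_tree lam (map_vtree fst u) = (\<Sum>S\<in>Pow {0..<n} - {{}}.
       smul (lam ^ (card S - 1)) (Poly_Mapping.single (map_vtree (gS (nth T ` S)) u) 1))"
    unfolding d_tree_def nent_map nn
    by (intro sum.cong refl) (simp add: sh atLeast0LessThan)
  also have "\<dots> = (\<Sum>S\<in>Pow (set T) - {{}}. smul (lam ^ (card S - 1)) (Poly_Mapping.single (map_vtree (gS S) u) 1))"
  proof (rule sum.reindex_bij_witness[where j = "\<lambda>S. nth T ` S" and i = "\<lambda>S'. {p\<in>{0..<n}. T ! p \<in> S'}"])
    fix a assume a: "a \<in> Pow {0..<n} - {{}}"
    then show "{p \<in> {0..<n}. T ! p \<in> nth T ` a} = a"
    proof (intro set_eqI iffI)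
      fix p assume "p \<in> {p \<in> {0..<n}. T ! p \<in> nth T ` a}"
      then obtain p' where "p < n" "p' \<in> a" "T ! p = T ! p'" by auto
      moreover have "p' < n" using a \<open>p' \<in> a\<close> by auto
      ultimately show "p \<in> a" using inj by (metis inj_onD lessThan_iff)
    qed auto
    show "nth T ` a \<in> Pow (set T) - {{}}" using a by (auto simp: n_def)
    have "card (nth T ` a) = card a"
      using a inj by (intro card_image) (auto simp: atLeast0LessThan intro: inj_on_subset)
    then show "smul (lam ^ (card (nth T ` a) - 1)) (Poly_Mapping.single (map_vtree (gS (nth T ` a)) u) 1) =
         smul (lam ^ (card a - 1)) (Poly_Mapping.single (map_vtree (gS (nth T ` a)) u) 1)" by simp
  next
    fix b assume b: "b \<in> Pow (set T) - {{}}"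
    then show "nth T ` {p \<in> {0..<n}. T ! p \<in> b} = b"
      by (auto simp: n_def image_iff) (metis in_set_conv_nth subsetD)
    show "{p \<in> {0..<n}. T ! p \<in> b} \<in> Pow {0..<n} - {{}}"
      using b by (auto simp: n_def) (metis in_set_conv_nth subsetD)
  qed
  finally show ?thesis by (simp add: T_def)
qed


definition W :: "'k::comm_ring_1 \<Rightarrow> nat set \<Rightarrow> 'k" where
  "W lam S = (if S = {} then 0 else lam ^ (card S - 1))"

lemma coef:
  assumes "finite x" "finite y"
    and e: "x \<union> y' = {} \<longleftrightarrow> x = {} \<and> y = {}" and c: "card (x \<union> y') = card x + card y"
  shows "W lam (x \<union> y') = (if y = {} then W lam x else 0) + (if x = {} then W lam y else 0) + lam * (W lam x * W lam y)"
proof (cases "x = {}")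
  case True
  note x = this
  show ?thesis
  proof (cases "y = {}")
    case True
    then show ?thesis using x e by (simp add: W_def)
  next
    case False
    then have "x \<union> y' \<noteq> {}" using e by blast
    then show ?thesis using x False c by (simp add: W_def)
  qed
next
  case False
  note x = this
  have ne: "x \<union> y' \<noteq> {}" using e x by blast
  show ?thesis
  proof (cases "y = {}")
    case True
    then show ?thesis using x ne c by (simp add: W_def)
  next
    case False
    then have "card x > 0" "card y > 0" using assms x by auto
    then have eq: "card x + card y - 1 = Suc ((card x - 1) + (card y - 1))" by simp
    have "W lam (x \<union> y') = lam ^ (card x + card y - 1)" by (simp only: W_def if_not_P[OF ne] c)
    also have "\<dots> = lam * (lam ^ (card x - 1) * lam ^ (card y - 1))" by (simp only: eq power_Suc power_add)
    also have "\<dots> = (if y = {} then W lam x else 0) + (if x = {} then W lam y else 0) + lam * (W lam x * W lam y)"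
      using x False by (simp add: W_def)
    finally show ?thesis .
  qed
qed

lemma sum_Pow_W:
  fixes X :: "nat set \<Rightarrow> ('a \<Rightarrow>\<^sub>0 'k::comm_ring_1)"
  assumes "finite A"
  shows "(\<Sum>S\<in>Pow A - {{}}. smul (lam ^ (card S - 1)) (X S)) = (\<Sum>S\<in>Pow A. smul (W lam S) (X S))"
proof -
  have "(\<Sum>S\<in>Pow A. smul (W lam S) (X S)) = smul (W lam {}) (X {}) + (\<Sum>S\<in>Pow A - {{}}. smul (W lam S) (X S))"
    using assms by (intro sum.remove) auto
  also have "\<dots> = (\<Sum>S\<in>Pow A - {{}}. smul (lam ^ (card S - 1)) (X S))"
    by (simp add: W_def)
  finally show ?thesis ..
qed

lemma sum_combine:
  fixes G :: "nat set \<Rightarrow> nat set \<Rightarrow> ('y, 'k::comm_ring_1) lin"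
  assumes "finite A" "finite B" "{} \<in> A" "{} \<in> B"
    and cf: "\<And>x y. x \<in> A \<Longrightarrow> y \<in> B \<Longrightarrow> c x y = (if y = {} then W lam x else 0) + (if x = {} then W lam y else 0) + lam * (W lam x * W lam y)"
  shows "(\<Sum>x\<in>A. \<Sum>y\<in>B. smul (c x y) (G x y)) =
     (\<Sum>x\<in>A. smul (W lam x) (G x {})) + (\<Sum>y\<in>B. smul (W lam y) (G {} y)) +
     smul lam (\<Sum>x\<in>A. \<Sum>y\<in>B. smul (W lam x * W lam y) (G x y))"
proof -
  have 1: "(\<Sum>x\<in>A. smul (W lam x) (G x {})) = (\<Sum>x\<in>A. \<Sum>y\<in>B. smul (if y = {} then W lam x else 0) (G x y))"
  proof (rule sum.cong[OF refl])
    fix x assume "x \<in> A"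
    have "(\<Sum>y\<in>B. smul (if y = {} then W lam x else 0) (G x y)) = (\<Sum>y\<in>B. if y = {} then smul (W lam x) (G x y) else 0)"
      by (intro sum.cong) auto
    also have "\<dots> = smul (W lam x) (G x {})" using assms by (simp add: sum.delta')
    finally show "smul (W lam x) (G x {}) = (\<Sum>y\<in>B. smul (if y = {} then W lam x else 0) (G x y))" ..
  qed
  have 2: "(\<Sum>y\<in>B. smul (W lam y) (G {} y)) = (\<Sum>x\<in>A. \<Sum>y\<in>B. smul (if x = {} then W lam y else 0) (G x y))"
  proof -
    have "(\<Sum>x\<in>A. \<Sum>y\<in>B. smul (if x = {} then W lam y else 0) (G x y)) = (\<Sum>x\<in>A. if x = {} then (\<Sum>y\<in>B. smul (W lam y) (G x y)) else 0)"
      by (intro sum.cong) auto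
    also have "\<dots> = (\<Sum>y\<in>B. smul (W lam y) (G {} y))" using assms by (simp add: sum.delta')
    finally show ?thesis ..
  qed
  have 3: "smul lam (\<Sum>x\<in>A. \<Sum>y\<in>B. smul (W lam x * W lam y) (G x y)) = (\<Sum>x\<in>A. \<Sum>y\<in>B. smul (lam * (W lam x * W lam y)) (G x y))"
    by (simp add: smul_sum)
  show ?thesis unfolding 1 2 3
    by (simp add: sum.distrib[symmetric] smul_add_left[symmetric] cf cong: sum.cong)
qed

lemma lin_ext_fsum: "lin_ext (\<lambda>t. \<Sum>i\<in>A. f i t) p = (\<Sum>i\<in>A. lin_ext (f i) p)"
  by (induction A rule: infinite_finite_induct) (simp_all add: lin_ext_fadd)

lemma d_tree_lin:
  "lin_ext F (d_tree lam t) = (\<Sum>S\<in>Pow {0..<nent t}. smul (W lam S) (F (shift_tree S 0 t)))"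
  unfolding d_tree_def lin_ext_sum lin_ext_smul lin_ext_single1
  by (rule sum_Pow_W) simp

lemma reidx:
  fixes g :: "nat set \<Rightarrow> 'a::comm_monoid_add"
  shows "(\<Sum>S\<in>Pow {0..<na+nb}. g S) = (\<Sum>S1\<in>Pow {0..<na}. \<Sum>S2\<in>Pow {0..<nb}. g (S1 \<union> (\<lambda>i. i + na) ` S2))"
proof -
  have "(\<Sum>S\<in>Pow {0..<na+nb}. g S) = (\<Sum>(S1, S2)\<in>Pow {0..<na} \<times> Pow {0..<nb}. g (S1 \<union> (\<lambda>i. i + na) ` S2))"
  proof (rule sum.reindex_bij_witness[where j = "\<lambda>S. (S \<inter> {0..<na}, {i. i + na \<in> S})"
        and i = "\<lambda>(S1, S2). S1 \<union> (\<lambda>i. i + na) ` S2"])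
    fix S assume S: "S \<in> Pow {0..<na+nb}"
    show "(case (S \<inter> {0..<na}, {i. i + na \<in> S}) of (S1, S2) \<Rightarrow> S1 \<union> (\<lambda>i. i + na) ` S2) = S"
    proof (intro set_eqI iffI)
      fix x assume "x \<in> S"
      then show "x \<in> (case (S \<inter> {0..<na}, {i. i + na \<in> S}) of (S1, S2) \<Rightarrow> S1 \<union> (\<lambda>i. i + na) ` S2)"
        by (cases "x < na") (auto simp: image_iff intro!: exI[of _ "x - na"])
    qed auto
    show "(S \<inter> {0..<na}, {i. i + na \<in> S}) \<in> Pow {0..<na} \<times> Pow {0..<nb}" using S by auto
    show "(case (S \<inter> {0..<na}, {i. i + na \<in> S}) of (S1, S2) \<Rightarrow> g (S1 \<union> (\<lambda>i. i + na) ` S2)) = g S"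
      using \<open>(case (S \<inter> {0..<na}, {i. i + na \<in> S}) of (S1, S2) \<Rightarrow> S1 \<union> (\<lambda>i. i + na) ` S2) = S\<close> by simp
  next
    fix p assume p: "p \<in> Pow {0..<na} \<times> Pow {0..<nb}"
    then obtain S1 S2 where p': "p = (S1, S2)" "S1 \<subseteq> {0..<na}" "S2 \<subseteq> {0..<nb}" by auto
    show "((case p of (S1, S2) \<Rightarrow> S1 \<union> (\<lambda>i. i + na) ` S2) \<inter> {0..<na},
           {i. i + na \<in> (case p of (S1, S2) \<Rightarrow> S1 \<union> (\<lambda>i. i + na) ` S2)}) = p"
      using p' by auto
    show "(case p of (S1, S2) \<Rightarrow> S1 \<union> (\<lambda>i. i + na) ` S2) \<in> Pow {0..<na+nb}"
      using p' by auto
  qed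
  then show ?thesis by (simp add: sum.cartesian_product)
qed

lemma d_basis:
  fixes a b :: "('x \<times> nat) vtree" and lam q :: "'k::comm_ring_1"
  assumes ra: "rootok a" and rb: "rootok b"
  shows "lin_ext (d_tree lam) (opk k q a b) =
     lin_ext (\<lambda>t. opk k q t b) (d_tree lam a) + lin_ext (\<lambda>s. opk k q a s) (d_tree lam b) +
     smul lam (lin_ext (\<lambda>t. lin_ext (\<lambda>s. opk k q t s) (d_tree lam b)) (d_tree lam a))"
proof -
  define na where "na = nent a"
  define nb where "nb = nent b"
  define ea where "ea = enum_tree 0 a"
  define eb where "eb = enum_tree na b"
  define G where "G S1 S2 = opk k q (shift_tree S1 0 a) (shift_tree S2 0 b)" for S1 S2
  define P where "P = opk k q ea eb"
  have rea: "rootok ea" "rootok eb" using ra rb by (simp_all add: ea_def eb_def)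
  have s1: "opk k q a b = gmap (map_vtree fst) P"
    using opk_map[OF rea, of k q fst] by (simp add:  P_def ea_def eb_def enum_fst)
  have keysP: "distinct (map snd (ents u)) \<and> set (map snd (ents u)) = {0..<na+nb}" if u: "u \<in> Poly_Mapping.keys P" for u
  proof -
    have "mset (ents u) = mset (ents ea) + mset (ents eb)"
      using opk_mset[OF rea u[unfolded P_def ]] .
    then have "mset (map snd (ents u)) = mset (map snd (ents ea)) + mset (map snd (ents eb))"
      by (simp add: mset_map)
    also have "\<dots> = mset [0..<na+nb]"
      by (simp add: ea_def eb_def enum_ents_snd na_def nb_def upt_add_eq_append[of 0 "nent a"])
    finally have m: "mset (map snd (ents u)) = mset [0..<na+nb]" .
    then have "distinct (map snd (ents u))" by (metis distinct_upt mset_eq_imp_distinct_iff)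
    moreover have "set (map snd (ents u)) = {0..<na+nb}" using m by (metis mset_eq_setD set_upt)
    ultimately show ?thesis by blast
  qed
  have LHS: "lin_ext (d_tree lam) (opk k q a b) = (\<Sum>S\<in>Pow {0..<na+nb}. smul (W lam S) (opk k q (shift_tree S 0 a) (shift_tree S na b)))"
  proof -
    have "lin_ext (d_tree lam) (opk k q a b) = lin_ext (\<lambda>u. d_tree lam (map_vtree fst u)) P" by (simp add: s1 gmap_def lin_ext_comp)
    also have "\<dots> = lin_ext (\<lambda>u. \<Sum>S\<in>Pow {0..<na+nb} - {{}}. smul (lam ^ (card S - 1)) (Poly_Mapping.single (map_vtree (gS S) u) 1)) P"
    proof (rule lin_ext_cong)
      fix u assume u: "u \<in> Poly_Mapping.keys P"
      have d: "distinct (map snd (ents u))" and st: "set (map snd (ents u)) = {0..<na+nb}"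
        using keysP[OF u] by auto
      show "d_tree lam (map_vtree fst u) = (\<Sum>S\<in>Pow {0..<na+nb} - {{}}. smul (lam ^ (card S - 1)) (Poly_Mapping.single (map_vtree (gS S) u) 1))"
        using d_tree_tagged[OF d, of lam] unfolding st .
    qed
    also have "\<dots> = (\<Sum>S\<in>Pow {0..<na+nb} - {{}}. smul (lam ^ (card S - 1)) (gmap (map_vtree (gS S)) P))"
      by (simp add: lin_ext_fsum lin_ext_fsmul gmap_def)
    also have "\<dots> = (\<Sum>S\<in>Pow {0..<na+nb} - {{}}. smul (lam ^ (card S - 1)) (opk k q (shift_tree S 0 a) (shift_tree S na b)))"
      by (simp only: P_def opk_map[OF rea, symmetric]) (simp add: ea_def eb_def shift_enum)
    also have "\<dots> = (\<Sum>S\<in>Pow {0..<na+nb}. smul (W lam S) (opk k q (shift_tree S 0 a) (shift_tree S na b)))"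
      by (rule sum_Pow_W) simp
    finally show ?thesis .
  qed
  also have "\<dots> = (\<Sum>S1\<in>Pow {0..<na}. \<Sum>S2\<in>Pow {0..<nb}. smul (W lam (S1 \<union> (\<lambda>i. i + na) ` S2)) (G S1 S2))"
    unfolding reidx
  proof (intro sum.cong refl)
    fix S1 S2 assume S: "S1 \<in> Pow {0..<na}" "S2 \<in> Pow {0..<nb}"
    have "shift_tree (S1 \<union> (\<lambda>i. i + na) ` S2) 0 a = shift_tree S1 0 a"
      by (rule shift_cong) (use S in \<open>auto simp: na_def\<close>)
    moreover have "shift_tree (S1 \<union> (\<lambda>i. i + na) ` S2) na b = shift_tree S2 0 b"
      by (rule shift_cong) (use S in \<open>auto simp: nb_def\<close>)
    ultimately show "smul (W lam (S1 \<union> (\<lambda>i. i + na) ` S2)) (opk k q (shift_tree (S1 \<union> (\<lambda>i. i + na) ` S2) 0 a) (shift_tree (S1 \<union> (\<lambda>i. i + na) ` S2) na b))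
       = smul (W lam (S1 \<union> (\<lambda>i. i + na) ` S2)) (G S1 S2)" by (simp add: G_def)
  qed
  also have "\<dots> = (\<Sum>x\<in>Pow {0..<na}. smul (W lam x) (G x {})) + (\<Sum>y\<in>Pow {0..<nb}. smul (W lam y) (G {} y)) +
     smul lam (\<Sum>x\<in>Pow {0..<na}. \<Sum>y\<in>Pow {0..<nb}. smul (W lam x * W lam y) (G x y))"
  proof (rule sum_combine)
    fix x y assume xy: "x \<in> Pow {0..<na}" "y \<in> Pow {0..<nb}"
    have fin: "finite x" "finite y" using xy finite_subset by auto
    have disj: "x \<inter> (\<lambda>i. i + na) ` y = {}" using xy by auto
    have "card (x \<union> (\<lambda>i. i + na) ` y) = card x + card ((\<lambda>i. i + na) ` y)"
      using fin disj by (simp add: card_Un_disjoint)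
    also have "\<dots> = card x + card y" by (simp add: card_image)
    finally show "W lam (x \<union> (\<lambda>i. i + na) ` y) = (if y = {} then W lam x else 0) + (if x = {} then W lam y else 0) + lam * (W lam x * W lam y)"
      by (intro coef fin) auto
  qed auto
  also have "\<dots> = lin_ext (\<lambda>t. opk k q t b) (d_tree lam a) + lin_ext (\<lambda>s. opk k q a s) (d_tree lam b) +
     smul lam (lin_ext (\<lambda>t. lin_ext (\<lambda>s. opk k q t s) (d_tree lam b)) (d_tree lam a))"
  proof -
    have t1: "lin_ext (\<lambda>t. opk k q t b) (d_tree lam a) = (\<Sum>x\<in>Pow {0..<na}. smul (W lam x) (G x {}))"
      unfolding d_tree_lin G_def na_def by simp
    have t2: "lin_ext (\<lambda>s. opk k q a s) (d_tree lam b) = (\<Sum>y\<in>Pow {0..<nb}. smul (W lam y) (G {} y))"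
      unfolding d_tree_lin G_def nb_def by simp
    have t3: "lin_ext (\<lambda>t. lin_ext (\<lambda>s. opk k q t s) (d_tree lam b)) (d_tree lam a) =
        (\<Sum>x\<in>Pow {0..<na}. \<Sum>y\<in>Pow {0..<nb}. smul (W lam x * W lam y) (G x y))"
      unfolding d_tree_lin G_def na_def nb_def by (simp only: smul_sum smul_smul)
    show ?thesis unfolding t1 t2 t3 ..
  qed
  finally show ?thesis .
qed


lemma basis_axioms:
  assumes wa: "wf_vtree Y a" "wf_vtree Y b" "wf_vtree Y c" and nl: "a \<noteq> Leaf" "b \<noteq> Leaf" "c \<noteq> Leaf"
  shows "lin_ext (\<lambda>u. prec_t q u c) (prec_t q a b) = lin_ext (\<lambda>v. prec_t q a v) (stt q b c)"
    "lin_ext (\<lambda>u. prec_t q u c) (succ_t q a b) = lin_ext (\<lambda>v. succ_t q a v) (prec_t q b c)"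
    "lin_ext (\<lambda>u. succ_t q u c) (stt q a b) = lin_ext (\<lambda>v. succ_t q a v) (succ_t q b c)"
    "lin_ext (\<lambda>u. bul_t q u c) (succ_t q a b) = lin_ext (\<lambda>v. succ_t q a v) (bul_t q b c)"
    "lin_ext (\<lambda>u. bul_t q u c) (prec_t q a b) = lin_ext (\<lambda>v. bul_t q a v) (succ_t q b c)"
    "lin_ext (\<lambda>u. prec_t q u c) (bul_t q a b) = lin_ext (\<lambda>v. bul_t q a v) (prec_t q b c)"
    "lin_ext (\<lambda>u. bul_t q u c) (bul_t q a b) = lin_ext (\<lambda>v. bul_t q a v) (bul_t q b c)"
proof -
  obtain xs ts ys ss zs rs where abc: "a = Node xs ts" "b = Node ys ss" "c = Node zs rs"
    using nl by (metis vtree.exhaust)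
  have ne: "ts \<noteq> []" "ss \<noteq> []" "rs \<noteq> []" using wa abc by auto
  obtain ba la where ts: "ts = ba @ [la]" using ne(1) by (metis rev_exhaust)
  obtain hb sb where ss: "ss = hb # sb" using ne(2) by (metis list.exhaust)
  obtain hc rc where rs: "rs = hc # rc" using ne(3) by (metis list.exhaust)
  have wla: "wf_vtree Y la" using wa abc ts by auto
  have whb: "wf_vtree Y hb" using wa abc ss by auto
  have whc: "wf_vtree Y hc" using wa abc rs by auto
  have A1: "ASSOC q la b c" using assoc wla wa by blast
  have A2: "ASSOC q a hb c" using assoc whb wa by blast
  have A3: "ASSOC q a b hc" using assoc whc wa by blast
  have A4: "ASSOC q a hb hc" using assoc whb whc wa by blast
  have A5: "ASSOC q la b hc" using assoc wla whc wa by blast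
  have A6: "ASSOC q la hb c" using assoc wla whb wa by blast
  have A7: "ASSOC q la hb hc" using assoc wla whb whc by blast
  have aeq: "a = Node xs (ba @ [la])" and beq: "b = Node ys (hb # sb)" and ceq: "c = Node zs (hc # rc)"
    using abc ts ss rs by auto
  have sab: "star q a b = stt q a b" and sbc: "star q b c = stt q b c"
    using star_stt wa nl by blast+
  show "lin_ext (\<lambda>u. prec_t q u c) (prec_t q a b) = lin_ext (\<lambda>v. prec_t q a v) (stt q b c)"
    using ax1[OF A1, where xs=xs and ba=ba, folded aeq] unfolding sbc .
  show "lin_ext (\<lambda>u. prec_t q u c) (succ_t q a b) = lin_ext (\<lambda>v. succ_t q a v) (prec_t q b c)"
    using ax2[OF A2, where sb=sb and ys=ys, folded beq] .
  show "lin_ext (\<lambda>u. succ_t q u c) (stt q a b) = lin_ext (\<lambda>v. succ_t q a v) (succ_t q b c)"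
    using ax3[OF A3, where zs=zs and rc=rc, folded ceq] unfolding sab .
  show "lin_ext (\<lambda>u. bul_t q u c) (succ_t q a b) = lin_ext (\<lambda>v. succ_t q a v) (bul_t q b c)"
    using ax4[OF A4, where zs=zs and rc=rc and sb=sb and ys=ys, folded beq ceq] .
  show "lin_ext (\<lambda>u. bul_t q u c) (prec_t q a b) = lin_ext (\<lambda>v. bul_t q a v) (succ_t q b c)"
    using ax5[OF A5, where zs=zs and rc=rc and xs=xs and ba=ba, folded aeq ceq] .
  show "lin_ext (\<lambda>u. prec_t q u c) (bul_t q a b) = lin_ext (\<lambda>v. bul_t q a v) (prec_t q b c)"
    using ax6[OF A6, where xs=xs and ba=ba and sb=sb and ys=ys, folded aeq beq] .
  show "lin_ext (\<lambda>u. bul_t q u c) (bul_t q a b) = lin_ext (\<lambda>v. bul_t q a v) (bul_t q b c)"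
    using ax7[OF A7, where zs=zs and rc=rc and xs=xs and ba=ba and sb=sb and ys=ys, folded aeq beq ceq] .
qed

lemma trilin_L: "bilin_ext f (bilin_ext g A B) C =
   lin_ext (\<lambda>a. lin_ext (\<lambda>b. lin_ext (\<lambda>c. lin_ext (\<lambda>u. f u c) (g a b)) C) B) A"
  by (simp add: bilin_ext_lin lin_ext_comp lin_ext_swap[of _ C])

lemma trilin_R: "bilin_ext f A (bilin_ext g B C) =
   lin_ext (\<lambda>a. lin_ext (\<lambda>b. lin_ext (\<lambda>c. lin_ext (\<lambda>v. f a v) (g b c)) C) B) A"
  by (simp add: bilin_ext_lin lin_ext_comp)

lemma bilin_stt: "DT_prec q B C + DT_succ q B C + smul q (DT_bul q B C) = bilin_ext (stt q) B C"
  by (simp add: DT_prec_def DT_succ_def DT_bul_def bilin_ext_lin stt_eta lin_ext_fadd lin_ext_fsmul)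

lemma DT_keys: "P \<in> DT Y \<Longrightarrow> t \<in> Poly_Mapping.keys P \<Longrightarrow> wf_vtree Y t \<and> t \<noteq> Leaf"
  by (auto simp: DT_def)

lemma tri_lift:
  assumes "A \<in> DT Y" "B \<in> DT Y" "C \<in> DT Y"
    and "\<And>a b c. wf_vtree Y a \<Longrightarrow> wf_vtree Y b \<Longrightarrow> wf_vtree Y c \<Longrightarrow> a \<noteq> Leaf \<Longrightarrow> b \<noteq> Leaf \<Longrightarrow> c \<noteq> Leaf \<Longrightarrow>
          lin_ext (\<lambda>u. f u c) (g a b) = lin_ext (\<lambda>v. f' a v) (g' b c)"
  shows "bilin_ext f (bilin_ext g A B) C = bilin_ext f' A (bilin_ext g' B C)"
  unfolding trilin_L trilin_R
  by (intro lin_ext_cong) (simp add: assms(4) DT_keys[OF assms(1)] DT_keys[OF assms(2)] DT_keys[OF assms(3)])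

lemma op_props:
  fixes f :: "'y vtree \<Rightarrow> 'y vtree \<Rightarrow> ('y,'k::comm_ring_1) lin" and Y :: "'y set"
  assumes "\<And>a b. wf_vtree Y a \<Longrightarrow> wf_vtree Y b \<Longrightarrow> Poly_Mapping.keys (f a b) \<subseteq> {t. wf_vtree Y t \<and> t \<noteq> Leaf}"
  shows "(\<forall>a\<in>DT Y. \<forall>b\<in>DT Y. bilin_ext f a b \<in> DT Y) \<and>
        (\<forall>a\<in>DT Y. \<forall>a'\<in>DT Y. \<forall>b\<in>DT Y. bilin_ext f (a + a') b = bilin_ext f a b + bilin_ext f a' b \<and>
            bilin_ext f b (a + a') = bilin_ext f b a + bilin_ext f b a') \<and>
        (\<forall>c. \<forall>a\<in>DT Y. \<forall>b\<in>DT Y. bilin_ext f (smul c a) b = smul c (bilin_ext f a b) \<and>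
            bilin_ext f a (smul c b) = smul c (bilin_ext f a b))"
proof (intro conjI ballI allI)
  fix A B :: "('y,'k) lin" assume AB: "A \<in> DT Y" "B \<in> DT Y"
  have "Poly_Mapping.keys (bilin_ext f A B) \<subseteq> {t. wf_vtree Y t \<and> t \<noteq> Leaf}"
  proof
    fix t assume "t \<in> Poly_Mapping.keys (bilin_ext f A B)"
    then obtain a where a: "a \<in> Poly_Mapping.keys A" "t \<in> Poly_Mapping.keys (lin_ext (f a) B)"
      unfolding bilin_ext_lin using keys_lin_ext by fastforce
    then obtain b where b: "b \<in> Poly_Mapping.keys B" "t \<in> Poly_Mapping.keys (f a b)"
      using keys_lin_ext by fastforce
    show "t \<in> {t. wf_vtree Y t \<and> t \<noteq> Leaf}"
      using assms[of a b] DT_keys[OF AB(1) a(1)] DT_keys[OF AB(2) b(1)] b(2) by blast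
  qed
  then show "bilin_ext f A B \<in> DT Y" unfolding DT_def by auto
qed (simp_all add: bilin_ext_lin lin_ext_add lin_ext_smul lin_ext_fadd lin_ext_fsmul)

lemma q_tri:
  fixes Y :: "'y set" and q :: "'k::comm_ring_1"
  shows "q_tridendriform smul (DT Y) (DT_prec q) (DT_succ q) (DT_bul q) q"
proof -
  have T: "0 \<in> DT Y" "\<And>a b. a \<in> DT Y \<Longrightarrow> b \<in> DT Y \<Longrightarrow> a + b \<in> DT Y" "\<And>c a. a \<in> DT Y \<Longrightarrow> smul c a \<in> DT Y"
    unfolding DT_def using keys_add keys_smul by fastforce+
  have ops: "\<forall>op\<in>{DT_prec q, DT_succ q, DT_bul q}.
        (\<forall>a\<in>DT Y. \<forall>b\<in>DT Y. op a b \<in> DT Y) \<and>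
        (\<forall>a\<in>DT Y. \<forall>a'\<in>DT Y. \<forall>b\<in>DT Y. op (a + a') b = op a b + op a' b \<and> op b (a + a') = op b a + op b a') \<and>
        (\<forall>c. \<forall>a\<in>DT Y. \<forall>b\<in>DT Y. op (smul c a) b = smul c (op a b) \<and> op a (smul c b) = smul c (op a b))"
  proof (intro ballI)
    fix op :: "('y,'k) lin \<Rightarrow> ('y,'k) lin \<Rightarrow> ('y,'k) lin" assume "op \<in> {DT_prec q, DT_succ q, DT_bul q}"
    then show "(\<forall>a\<in>DT Y. \<forall>b\<in>DT Y. op a b \<in> DT Y) \<and>
        (\<forall>a\<in>DT Y. \<forall>a'\<in>DT Y. \<forall>b\<in>DT Y. op (a + a') b = op a b + op a' b \<and> op b (a + a') = op b a + op b a') \<and>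
        (\<forall>c. \<forall>a\<in>DT Y. \<forall>b\<in>DT Y. op (smul c a) b = smul c (op a b) \<and> op a (smul c b) = smul c (op a b))"
      unfolding DT_prec_def DT_succ_def DT_bul_def
      apply (elim insertE emptyE)
        apply (hypsubst, rule op_props, erule (1) keys_ops_wf)
       apply (hypsubst, rule op_props, erule (1) keys_ops_wf)
      apply (hypsubst, rule op_props, erule (1) keys_ops_wf)
      done
  qed
  have ax: "\<forall>a\<in>DT Y. \<forall>b\<in>DT Y. \<forall>c\<in>DT Y.
        DT_prec q (DT_prec q a b) c = DT_prec q a (bilin_ext (stt q) b c) \<and>
        DT_prec q (DT_succ q a b) c = DT_succ q a (DT_prec q b c) \<and>
        DT_succ q (bilin_ext (stt q) a b) c = DT_succ q a (DT_succ q b c) \<and>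
        DT_bul q (DT_succ q a b) c = DT_succ q a (DT_bul q b c) \<and>
        DT_bul q (DT_prec q a b) c = DT_bul q a (DT_succ q b c) \<and>
        DT_prec q (DT_bul q a b) c = DT_bul q a (DT_prec q b c) \<and>
        DT_bul q (DT_bul q a b) c = DT_bul q a (DT_bul q b c)"
    unfolding DT_prec_def DT_succ_def DT_bul_def
    apply (intro ballI conjI)
          apply (rule tri_lift, assumption+, rule basis_axioms(1)[of Y], assumption+)
         apply (rule tri_lift, assumption+, rule basis_axioms(2)[of Y], assumption+)
        apply (rule tri_lift, assumption+, rule basis_axioms(3)[of Y], assumption+)
       apply (rule tri_lift, assumption+, rule basis_axioms(4)[of Y], assumption+)
      apply (rule tri_lift, assumption+, rule basis_axioms(5)[of Y], assumption+)
     apply (rule tri_lift, assumption+, rule basis_axioms(6)[of Y], assumption+)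
    apply (rule tri_lift, assumption+, rule basis_axioms(7)[of Y], assumption+)
    done
  show ?thesis
    unfolding q_tridendriform_def Let_def
    using T ops ax by (simp only: bilin_stt) blast
qed


lemma d_lift:
  fixes A B :: "('x \<times> nat, 'k::comm_ring_1) lin"
  assumes rA: "\<And>t. t \<in> Poly_Mapping.keys A \<Longrightarrow> rootok t" and rB: "\<And>t. t \<in> Poly_Mapping.keys B \<Longrightarrow> rootok t"
  shows "d_X lam (bilin_ext (opk k q) A B) = bilin_ext (opk k q) (d_X lam A) B + bilin_ext (opk k q) A (d_X lam B)
           + smul lam (bilin_ext (opk k q) (d_X lam A) (d_X lam B))"
proof -
  let ?F = "opk k q" and ?D = "d_tree lam"
  have L: "d_X lam (bilin_ext ?F A B) = lin_ext (\<lambda>a. lin_ext (\<lambda>b. lin_ext ?D (?F a b)) B) A"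
    by (simp add: d_X_def bilin_ext_lin lin_ext_comp)
  have R1: "bilin_ext ?F (d_X lam A) B = lin_ext (\<lambda>a. lin_ext (\<lambda>b. lin_ext (\<lambda>t. ?F t b) (?D a)) B) A"
    by (simp add: d_X_def bilin_ext_lin lin_ext_comp lin_ext_swap[of _ B])
  have R2: "bilin_ext ?F A (d_X lam B) = lin_ext (\<lambda>a. lin_ext (\<lambda>b. lin_ext (\<lambda>s. ?F a s) (?D b)) B) A"
    by (simp add: d_X_def bilin_ext_lin lin_ext_comp)
  have R3: "bilin_ext ?F (d_X lam A) (d_X lam B) =
      lin_ext (\<lambda>a. lin_ext (\<lambda>b. lin_ext (\<lambda>t. lin_ext (\<lambda>s. ?F t s) (?D b)) (?D a)) B) A"
  proof -
    have "bilin_ext ?F (d_X lam A) (d_X lam B) = lin_ext (\<lambda>a. lin_ext (\<lambda>t. lin_ext (\<lambda>b. lin_ext (\<lambda>s. ?F t s) (?D b)) B) (?D a)) A"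
      by (simp add: d_X_def bilin_ext_lin lin_ext_comp)
    also have "\<dots> = lin_ext (\<lambda>a. lin_ext (\<lambda>b. lin_ext (\<lambda>t. lin_ext (\<lambda>s. ?F t s) (?D b)) (?D a)) B) A"
      by (rule lin_ext_cong) (rule lin_ext_swap)
    finally show ?thesis .
  qed
  have "lin_ext (\<lambda>a. lin_ext (\<lambda>b. lin_ext ?D (?F a b)) B) A =
      lin_ext (\<lambda>a. lin_ext (\<lambda>b. lin_ext (\<lambda>t. ?F t b) (?D a) + lin_ext (\<lambda>s. ?F a s) (?D b) +
         smul lam (lin_ext (\<lambda>t. lin_ext (\<lambda>s. ?F t s) (?D b)) (?D a))) B) A"
    by (intro lin_ext_cong d_basis rA rB)
  also have "\<dots> = bilin_ext ?F (d_X lam A) B + bilin_ext ?F A (d_X lam B) + smul lam (bilin_ext ?F (d_X lam A) (d_X lam B))"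
    unfolding R1 R2 R3 by (simp only: lin_ext_fadd lin_ext_fsmul)
  finally show ?thesis using L by simp
qed

lemma keys_sum_single:
  "Poly_Mapping.keys (\<Sum>S\<in>I. smul (c S) (Poly_Mapping.single (f S) 1)) \<subseteq> f ` I"
proof (induction I rule: infinite_finite_induct)
  case (insert x F)
  have 1: "Poly_Mapping.keys (smul (c x) (Poly_Mapping.single (f x) 1)) \<subseteq> {f x}"
    using keys_smul[of "c x" "Poly_Mapping.single (f x) 1"] by simp
  have "Poly_Mapping.keys (\<Sum>S\<in>insert x F. smul (c S) (Poly_Mapping.single (f S) 1)) =
      Poly_Mapping.keys (smul (c x) (Poly_Mapping.single (f x) 1) + (\<Sum>S\<in>F. smul (c S) (Poly_Mapping.single (f S) 1)))"
    by (subst sum.insert[OF insert(1,2)]) (rule refl)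
  also have "\<dots> \<subseteq> Poly_Mapping.keys (smul (c x) (Poly_Mapping.single (f x) 1)) \<union> Poly_Mapping.keys (\<Sum>S\<in>F. smul (c S) (Poly_Mapping.single (f S) 1))"
    by (rule keys_add)
  also have "\<dots> \<subseteq> f ` insert x F" using 1 insert(3) by auto
  finally show ?case .
qed simp_all

theorem proposition5p3:
  fixes X :: "'x set" and q lam :: "'k::comm_ring_1"
  shows "differential_q_tridendriform smul (DT (X \<times> (UNIV :: nat set)))
           (DT_prec q) (DT_succ q) (DT_bul q) (d_X lam) q lam"
proof -
  let ?T = "DT (X \<times> (UNIV :: nat set)) :: ('x \<times> nat, 'k) lin set"
  have rT: "\<And>A t. A \<in> ?T \<Longrightarrow> t \<in> Poly_Mapping.keys A \<Longrightarrow> rootok t"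
    using DT_keys rootok_wf by blast
  have dT: "d_X lam A \<in> ?T" if A: "A \<in> ?T" for A
  proof -
    have "Poly_Mapping.keys (d_X lam A) \<subseteq> {t. wf_vtree (X \<times> UNIV) t \<and> t \<noteq> Leaf}"
    proof
      fix u assume u0: "u \<in> Poly_Mapping.keys (d_X lam A)"
      have "u \<in> (\<Union>t\<in>Poly_Mapping.keys A. Poly_Mapping.keys (d_tree lam t))"
        using keys_lin_ext[of "d_tree lam" A] u0 unfolding d_X_def by (rule subsetD)
      then obtain t where t: "t \<in> Poly_Mapping.keys A" "u \<in> Poly_Mapping.keys (d_tree lam t)"
        by (rule UN_E)
      have "u \<in> (\<lambda>S. shift_tree S 0 t) ` (Pow {0..<nent t} - {{}})"
        using keys_sum_single[of "\<lambda>S. lam ^ (card S - 1)" "\<lambda>S. shift_tree S 0 t"] t(2)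
        unfolding d_tree_def by (rule subsetD)
      then obtain S where u: "u = shift_tree S 0 t" by (rule imageE)
      have w: "wf_vtree (X \<times> UNIV) t" "t \<noteq> Leaf" using DT_keys[OF A t(1)] by auto
      show "u \<in> {t. wf_vtree (X \<times> UNIV) t \<and> t \<noteq> Leaf}"
        unfolding u using wf_shift[OF w(1)] w(2) by (simp add: shift_Leaf)
    qed
    then show ?thesis unfolding DT_def by auto
  qed
  have ops: "DT_prec q = bilin_ext (opk 0 q)" "DT_succ q = bilin_ext (opk 1 q)" "DT_bul q = bilin_ext (opk 2 q)"
    by (simp_all add: DT_prec_def DT_succ_def DT_bul_def opk_def)
  have der: "\<forall>op\<in>{DT_prec q, DT_succ q, DT_bul q}. \<forall>a\<in>?T. \<forall>b\<in>?T.
        d_X lam (op a b) = op (d_X lam a) b + op a (d_X lam b) + smul lam (op (d_X lam a) (d_X lam b))"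
    unfolding ops
    apply (intro ballI)
    apply (elim insertE emptyE)
      apply (hypsubst, rule d_lift, erule (1) rT[rotated], erule (1) rT[rotated])+
    done
  show ?thesis
    unfolding differential_q_tridendriform_def
    apply (intro conjI)
        apply (rule q_tri)
       apply (blast intro: dT)
      apply (simp add: d_X_def lin_ext_add)
     apply (simp add: d_X_def lin_ext_smul)
    apply (rule der)
    done
qed


end
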